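(* Let $\mathcal O$ be a polycube with orthogonally convex layers and let $1\le i\le m-1$, with $L_i,R_i$ and the $i$-pointer determined by the selection procedure described in the context. For every unvisited $i$-band cell $r$: (a) $i$-clip$(r)$ is non-empty and lies on top of $\mathcal O_i$, and (b) $i$-clip$(r)$ is not adjacent to any $(i+1)$-band cell parallel to $r$. Moreover, (a) and (b) also hold with $i$-clip$(r)$ replaced by $i$-beam$(r)$.
   Context: A polycube $\mathcal O$ is an orthogonal polyhedron homeomorphic to a sphere formed as a union of unit cubes glued along entire faces; its surface is subdivided into unit squares called cells. Let $z_0<\dots<z_m$ be the distinct $z$-coordinates of vertices of $\mathcal O$; the $i$-plane is $z=z_i$; the layer $\mathcal O_i$ is the part of $\mathcal O$ between the $(i-1)$- and $i$-planes. $\mathcal O$ has orthogonally convex layers if each $\mathcal O_i$ meets every line parallel to a coordinate axis in a single segment or not at all. The $i$-band is the cyclic sequence of vertical surface cells between the $(i-1)$- and $i$-planes. A face is a maximal edge-connected set of coplanar cells; an $i$-face lies in the $i$-plane, either on top of $\mathcal O_i$ (top face) or on the bottom of $\mathcal O_{i+1}$ (bottom face). Adjacent means boundaries share a cell edge. Cells are parallel if in parallel planes; normals are outward normals; cw/ccw around a band is as viewed from $+z$. Beams: for a band cell $a$ (on the $i$- or $(i+1)$-band) whose horizontal edge $e$ in the $i$-plane is adjacent to an $i$-face, $i$-beam$(a)$ is the portion of that $i$-face illuminated by rays from $e$ in the horizontal direction orthogonal to $a$; otherwise it is empty. A nonempty beam has two anchors: $a$ and the band cell parallel to $a$ adjacent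 to the beam at its other end; both anchors define the same beam. Selection procedure. Each $i$-band gets a direction ($i$-pointer $\in\{cw,ccw\}$) and cells $L_i,R_i$. For $i$-band cells $a,b$, $i$-band$[a,b]$ is the closed band segment from $a$ to $b$ in the direction of the $i$-pointer. For an $i$-band cell $r$, $i$-clip$(r)$ is empty if $i$-beam$(r)$ is empty, and otherwise is the portion of the $i$-face containing $i$-beam$(r)$ delimited by (and including) $i$-beam$(r)$ and extending from it in the direction of the $i$-pointer from $r$. Initialization: 1-pointer $=ccw$; choose a top 1-face $F$ and two opposite cell edges $e_1,e_2$ on its boundary with $e_1$ adjacent to the 1-band and $e_2$ adjacent to the 2-band; $R_1$ is the 1-band cell adjacent to $e_1$, $L_1$ is the 1-band cell adjacent to $R_1$ in the ccw direction, the 1-bridge is 1-beam$(R_1)$, $L_2$ is the 2-band cell adjacent to $e_2$, and the 2-pointer is $ccw$. Recursive step ($i\ge 2$, given $L_i$ and the $i$-pointer): walking around the $i$-band starting at $L_i$ in the direction of the $i$-pointer, $R_i$ is the last encountered $i$-band cell such that $i$-clip$(R_i)$ is empty or adjacent to an $(i+1)$-band cell parallel to $R_i$. If $i$-clip$(R_i)$ is empty, $L_{i+1}$ is the $(i+1)$-band cell adjacent to $R_i$, the $i$-bridge is empty and the $(i+1)$-pointer equals the $i$-pointer. Otherwise, partitioning $i$-clip$(R_i)$ into beams parallel to $i$-beam$(R_i)$: $L_{i+1}$ is the $(i+1)$-band cell parallel to $R_i$ and adjacent to $i$-clip$(R_i)$ minimizing the number of beams delimited by $i$-beam$(R_i)$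 and $i$-beam$(L_{i+1})$, ties broken by minimum Manhattan distance to $R_i$; the $i$-bridge consists of $i$-beam$(R_i)$, $i$-beam$(L_{i+1})$ and the beams between them; the $(i+1)$-pointer equals the $i$-pointer if $R_i$ and $L_{i+1}$ have the same normal and is opposite otherwise. An $i$-band cell is visited if it belongs to $i$-band$[L_i,R_i]$ and unvisited otherwise. *)

theory Defs
  imports "HOL-Analysis.Analysis"
begin

text \<open>A polycube is a finite set of unit cubes; the cube with integer lower corner
  (x,y,z) occupies [x,x+1] x [y,y+1] x [z,z+1].  A surface cell is a pair (c,d) of a cube
  c and an outward direction d such that the neighbouring cube c + d is absent.\<close>

datatype dir = XP | XN | YP | YN | ZP | ZN
datatype pointer = CW | CCW

type_synonym pt = "int \<times> int \<times> int"
type_synonym cell = "pt \<times> dir"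

fun dvec :: "dir \<Rightarrow> pt" where
  "dvec XP = (1,0,0)" | "dvec XN = (-1,0,0)"
| "dvec YP = (0,1,0)" | "dvec YN = (0,-1,0)"
| "dvec ZP = (0,0,1)" | "dvec ZN = (0,0,-1)"

fun hvec :: "dir \<Rightarrow> int \<times> int" where
  "hvec XP = (1,0)" | "hvec XN = (-1,0)"
| "hvec YP = (0,1)" | "hvec YN = (0,-1)"
| "hvec ZP = (0,0)" | "hvec ZN = (0,0)"

fun axis :: "dir \<Rightarrow> nat" where
  "axis XP = 0" | "axis XN = 0" | "axis YP = 1" | "axis YN = 1" | "axis ZP = 2" | "axis ZN = 2"

fun opp :: "dir \<Rightarrow> dir" where
  "opp XP = XN" | "opp XN = XP" | "opp YP = YN" | "opp YN = YP" | "opp ZP = ZN" | "opp ZN = ZP"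

text \<open>Rotation by 90 degrees counterclockwise / clockwise as viewed from +z.\<close>
fun rot_ccw :: "dir \<Rightarrow> dir" where
  "rot_ccw XP = YP" | "rot_ccw YP = XN" | "rot_ccw XN = YN" | "rot_ccw YN = XP"
| "rot_ccw ZP = ZP" | "rot_ccw ZN = ZN"

fun rot_cw :: "dir \<Rightarrow> dir" where
  "rot_cw YP = XP" | "rot_cw XN = YP" | "rot_cw YN = XN" | "rot_cw XP = YN"
| "rot_cw ZP = ZP" | "rot_cw ZN = ZN"

fun flip :: "pointer \<Rightarrow> pointer" where
  "flip CW = CCW" | "flip CCW = CW"

text \<open>Direction of travel along a band at a cell with outward normal d.\<close>
fun tdir :: "pointer \<Rightarrow> dir \<Rightarrow> dir" where
  "tdir CCW d = rot_ccw d" | "tdir CW d = rot_cw d"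

fun padd :: "pt \<Rightarrow> pt \<Rightarrow> pt" where
  "padd (a,b,c) (x,y,z) = (a+x, b+y, c+z)"

fun zc :: "pt \<Rightarrow> int" where "zc (x,y,z) = z"

fun fp :: "pt \<Rightarrow> int \<times> int" where "fp (x,y,z) = (x,y)"

fun l1 :: "pt \<Rightarrow> pt \<Rightarrow> int" where
  "l1 (a,b,c) (x,y,z) = \<bar>a-x\<bar> + \<bar>b-y\<bar> + \<bar>c-z\<bar>"

fun add2 :: "int \<times> int \<Rightarrow> int \<times> int \<Rightarrow> int \<times> int" where
  "add2 (a,b) (x,y) = (a+x, b+y)"

fun scale2 :: "int \<Rightarrow> int \<times> int \<Rightarrow> int \<times> int" where
  "scale2 k (x,y) = (k*x, k*y)"

fun dot2 :: "int \<times> int \<Rightarrow> int \<times> int \<Rightarrow> int" where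
  "dot2 (a,b) (x,y) = a*x + b*y"

definition surface_cell :: "pt set \<Rightarrow> cell \<Rightarrow> bool" where
  "surface_cell P a \<longleftrightarrow> fst a \<in> P \<and> padd (fst a) (dvec (snd a)) \<notin> P"

definition horiz :: "dir \<Rightarrow> bool" where
  "horiz d \<longleftrightarrow> d \<in> {XP, XN, YP, YN}"

definition parallel :: "cell \<Rightarrow> cell \<Rightarrow> bool" where
  "parallel a b \<longleftrightarrow> axis (snd a) = axis (snd b)"

text \<open>Offsets (from the lower corner of the cube) of the four corners of the face of a unit cube
  in direction d.\<close>
definition ifacefsets :: "dir \<Rightarrow> pt set" where
  "ifacefsets d = {(u,v,w). u \<in> {0,1} \<and> v \<in> {0,1} \<and> w \<in> {0,1} \<and>
     (case d of XP \<Rightarrow> u = 1 | XN \<Rightarrow> u = 0 | YP \<Rightarrow> v = 1 | YN \<Rightarrow> v = 0 | ZP \<Rightarrow> w = 1 | ZN \<Rightarrow> w = 0)}"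

definition corners :: "cell \<Rightarrow> pt set" where
  "corners a = (\<lambda>u. padd (fst a) u) ` ifacefsets (snd a)"

text \<open>A cell edge is represented by the set of its two endpoints.\<close>
definition cell_edges :: "cell \<Rightarrow> pt set set" where
  "cell_edges a = {{p, q} | p q. p \<in> corners a \<and> q \<in> corners a \<and> l1 p q = 1}"

definition cell_adj :: "cell \<Rightarrow> cell \<Rightarrow> bool" where
  "cell_adj a b \<longleftrightarrow> a \<noteq> b \<and> cell_edges a \<inter> cell_edges b \<noteq> {}"

definition adj_to :: "cell \<Rightarrow> cell set \<Rightarrow> bool" where
  "adj_to a S \<longleftrightarrow> (\<exists>s\<in>S. cell_adj a s)"

definition adj_in :: "cell set \<Rightarrow> (cell \<times> cell) set" where
  "adj_in S = {(a,b). a \<in> S \<and> b \<in> S \<and> cell_adj a b}"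

fun cube_pts :: "pt \<Rightarrow> (real \<times> real \<times> real) set" where
  "cube_pts (x,y,z) = {(a,b,c). of_int x \<le> a \<and> a \<le> of_int x + 1 \<and>
      of_int y \<le> b \<and> b \<le> of_int y + 1 \<and> of_int z \<le> c \<and> c \<le> of_int z + 1}"

definition solid :: "pt set \<Rightarrow> (real \<times> real \<times> real) set" where
  "solid P = \<Union> (cube_pts ` P)"

definition polycube :: "pt set \<Rightarrow> bool" where
  "polycube P \<longleftrightarrow> finite P \<and> P \<noteq> {} \<and>
     frontier (solid P) homeomorphic sphere (0 :: real \<times> real \<times> real) 1"

text \<open>z-levels: z_0 = zlo P and z_j = zlo P + j, for j = 0..m with m = num_m P.
  Layer i (1 \<le> i \<le> m) consists of the cubes with lower z-coordinate lvl P i = z_(i-1).\<close>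
definition zlo :: "pt set \<Rightarrow> int" where "zlo P = Min (zc ` P)"

definition num_m :: "pt set \<Rightarrow> nat" where
  "num_m P = nat (Max (zc ` P) + 1 - zlo P)"

definition lvl :: "pt set \<Rightarrow> nat \<Rightarrow> int" where
  "lvl P i = zlo P + int i - 1"

definition layer_solid :: "pt set \<Rightarrow> nat \<Rightarrow> (real \<times> real \<times> real) set" where
  "layer_solid P i = \<Union> (cube_pts ` {c \<in> P. zc c = lvl P i})"

fun unit_axis :: "nat \<Rightarrow> real \<times> real \<times> real" where
  "unit_axis 0 = (1,0,0)" | "unit_axis (Suc 0) = (0,1,0)" | "unit_axis _ = (0,0,1)"

definition axis_line :: "nat \<Rightarrow> real \<times> real \<times> real \<Rightarrow> (real \<times> real \<times> real) set" where
  "axis_line k q = {q + s *\<^sub>R unit_axis k | s. True}"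

definition ortho_convex_layers :: "pt set \<Rightarrow> bool" where
  "ortho_convex_layers P \<longleftrightarrow> (\<forall>i. 1 \<le> i \<and> i \<le> num_m P \<longrightarrow>
     (\<forall>k < 3. \<forall>q. layer_solid P i \<inter> axis_line k q = {} \<or>
        (\<exists>a b. layer_solid P i \<inter> axis_line k q = closed_segment a b)))"

text \<open>Each layer is a connected set (so that each band is a single cyclic sequence).\<close>
definition connected_layers :: "pt set \<Rightarrow> bool" where
  "connected_layers P \<longleftrightarrow> (\<forall>i. 1 \<le> i \<and> i \<le> num_m P \<longrightarrow> connected (layer_solid P i))"

definition band :: "pt set \<Rightarrow> nat \<Rightarrow> cell set" where
  "band P i = {a. surface_cell P a \<and> horiz (snd a) \<and> zc (fst a) = lvl P i}"

text \<open>Surface cells lying in the i-plane z = z_i: tops of cubes of layer i, bottoms of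
  cubes of layer i+1.\<close>
definition hcells :: "pt set \<Rightarrow> nat \<Rightarrow> cell set" where
  "hcells P i = {a. surface_cell P a \<and>
     ((snd a = ZP \<and> zc (fst a) = lvl P i) \<or> (snd a = ZN \<and> zc (fst a) = lvl P i + 1))}"

definition iface :: "pt set \<Rightarrow> nat \<Rightarrow> cell \<Rightarrow> cell set" where
  "iface P i g = {h. (g, h) \<in> rtrancl (adj_in (hcells P i))}"

definition is_top_face :: "pt set \<Rightarrow> nat \<Rightarrow> cell set \<Rightarrow> bool" where
  "is_top_face P i F \<longleftrightarrow> (\<exists>g \<in> hcells P i. F = iface P i g) \<and> (\<forall>a\<in>F. snd a = ZP)"

definition plane_edge :: "pt set \<Rightarrow> nat \<Rightarrow> cell \<Rightarrow> pt set" where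
  "plane_edge P i a = {p \<in> corners a. zc p = zlo P + int i}"

text \<open>i-beam(a): cells of the i-plane illuminated by rays from the i-plane edge e of a, in
  the horizontal direction orthogonal to a (pointing into the face cell f adjacent to e).\<close>
definition beam :: "pt set \<Rightarrow> nat \<Rightarrow> cell \<Rightarrow> cell set" where
  "beam P i a = {g \<in> hcells P i. \<exists>f \<in> hcells P i. plane_edge P i a \<in> cell_edges f \<and>
     (let u = (if fp (fst f) = fp (fst a) then hvec (opp (snd a)) else hvec (snd a)) in
       \<exists>k::nat. fp (fst g) = add2 (fp (fst f)) (scale2 (int k) u) \<and>
         (\<forall>j\<le>k. \<exists>h \<in> hcells P i. fp (fst h) = add2 (fp (fst f)) (scale2 (int j) u)))}"

text \<open>i-clip(r): the part of the i-face containing i-beam(r) that lies on the side of the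
  beam towards which the pointer points (from r), taken as the edge-connected component
  containing the beam.\<close>
definition clip :: "pt set \<Rightarrow> nat \<Rightarrow> pointer \<Rightarrow> cell \<Rightarrow> cell set" where
  "clip P i p r = (let B = beam P i r in
     if B = {} then {} else
     (let F = iface P i (SOME g. g \<in> B);
          t = hvec (tdir p (snd r));
          H = {g \<in> F. dot2 t (fp (fst g)) \<ge> dot2 t (fp (fst r))}
      in {g. \<exists>b \<in> B. (b, g) \<in> rtrancl (adj_in H)}))"

fun bnext :: "pt set \<Rightarrow> pointer \<Rightarrow> cell \<Rightarrow> cell" where
  "bnext P p (c, d) = (let t = tdir p d; c' = padd c (dvec t) in
     if padd c' (dvec d) \<in> P then (padd c' (dvec d), opp t)
     else if c' \<in> P then (c', d) else (c, t))"

definition band_seg :: "pt set \<Rightarrow> pointer \<Rightarrow> cell \<Rightarrow> cell \<Rightarrow> cell set" where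
  "band_seg P p a b = {(bnext P p ^^ k) a | k. k \<le> (LEAST n. (bnext P p ^^ n) a = b)}"

definition good_R :: "pt set \<Rightarrow> nat \<Rightarrow> pointer \<Rightarrow> cell \<Rightarrow> bool" where
  "good_R P i p r \<longleftrightarrow> clip P i p r = {} \<or>
     (\<exists>b \<in> band P (Suc i). parallel b r \<and> adj_to b (clip P i p r))"

definition selects_R :: "pt set \<Rightarrow> nat \<Rightarrow> cell \<Rightarrow> pointer \<Rightarrow> cell \<Rightarrow> bool" where
  "selects_R P i L p R \<longleftrightarrow> (\<exists>K < card (band P i). R = (bnext P p ^^ K) L \<and> good_R P i p R \<and>
     (\<forall>k. K < k \<and> k < card (band P i) \<longrightarrow> \<not> good_R P i p ((bnext P p ^^ k) L)))"

text \<open>Number of beams (parallel to beam(R)) delimited by beam(R) and beam(L), inclusive.\<close>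
definition nbeams :: "pointer \<Rightarrow> cell \<Rightarrow> cell \<Rightarrow> int" where
  "nbeams p R L = \<bar>dot2 (hvec (tdir p (snd R))) (add2 (fp (fst L)) (scale2 (-1) (fp (fst R))))\<bar> + 1"

text \<open>Manhattan distance between cell centres (coordinates doubled).\<close>
definition center2 :: "cell \<Rightarrow> pt" where
  "center2 a = padd (padd (padd (fst a) (fst a)) (1,1,1)) (dvec (snd a))"

definition mdist :: "cell \<Rightarrow> cell \<Rightarrow> int" where
  "mdist a b = l1 (center2 a) (center2 b)"

definition cand :: "pt set \<Rightarrow> nat \<Rightarrow> pointer \<Rightarrow> cell \<Rightarrow> cell \<Rightarrow> bool" where
  "cand P i p R L \<longleftrightarrow> L \<in> band P (Suc i) \<and> parallel L R \<and> adj_to L (clip P i p R)"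

text \<open>One recursive step (i \<ge> 2): given L_i and the i-pointer p, R_i is selected, and
  L_(i+1) and the (i+1)-pointer p' are determined.\<close>
definition step_ok :: "pt set \<Rightarrow> nat \<Rightarrow> cell \<Rightarrow> pointer \<Rightarrow> cell \<Rightarrow> cell \<Rightarrow> pointer \<Rightarrow> bool" where
  "step_ok P i L p R L' p' \<longleftrightarrow> selects_R P i L p R \<and>
     (if clip P i p R = {} then L' \<in> band P (Suc i) \<and> cell_adj R L' \<and> p' = p
      else cand P i p R L' \<and>
        (\<forall>M. cand P i p R M \<longrightarrow> nbeams p R L' < nbeams p R M \<or>
              (nbeams p R L' = nbeams p R M \<and> mdist R L' \<le> mdist R M)) \<and>
        p' = (if snd R = snd L' then p else flip p))"

text \<open>A complete run of the selection procedure: sequences L, R of cells and pointers p.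
  Initialization: a top 1-face F, a 1-band cell R_1 whose top edge e1 is on the boundary
  of F, and a parallel 2-band cell L_2 whose bottom edge e2 is on the boundary of F at the
  opposite end of the beam from e1 (both are anchors of the same nonempty beam).\<close>
definition selection_run :: "pt set \<Rightarrow> (nat \<Rightarrow> cell) \<Rightarrow> (nat \<Rightarrow> cell) \<Rightarrow> (nat \<Rightarrow> pointer) \<Rightarrow> bool" where
  "selection_run P L R p \<longleftrightarrow>
     p 1 = CCW \<and> p 2 = CCW \<and>
     (\<exists>F. is_top_face P 1 F \<and> R 1 \<in> band P 1 \<and> L 2 \<in> band P 2 \<and> parallel (R 1) (L 2) \<and>
        (\<exists>f \<in> F. plane_edge P 1 (R 1) \<in> cell_edges f) \<and>
        (\<exists>f \<in> F. plane_edge P 1 (L 2) \<in> cell_edges f) \<and>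
        beam P 1 (R 1) \<noteq> {} \<and> beam P 1 (R 1) = beam P 1 (L 2)) \<and>
     L 1 = bnext P CCW (R 1) \<and>
     (\<forall>j. 2 \<le> j \<and> j < num_m P \<longrightarrow> step_ok P j (L j) (p j) (R j) (L (Suc j)) (p (Suc j)))"

end

theory Submission
  imports Defs
begin


lemma dist3_le:
  fixes a b c x y z :: real
  shows "dist (a,b,c) (x,y,z) \<le> \<bar>a-x\<bar> + \<bar>b-y\<bar> + \<bar>c-z\<bar>"
proof -
  have "dist (b,c) (y,z) \<le> dist b y + dist c z"
    unfolding dist_Pair_Pair by (rule sqrt_sum_squares_le_sum) auto
  moreover have "dist (a,b,c) (x,y,z) \<le> dist a x + dist (b,c) (y,z)"
    unfolding dist_Pair_Pair[of a "(b,c)"] by (rule sqrt_sum_squares_le_sum) auto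
  ultimately show ?thesis by (simp add: dist_real_def)
qed

lemma cube_pts_Times: "cube_pts (x,y,z) = {of_int x..of_int x+1} \<times> {of_int y..of_int y+1} \<times> {of_int z..of_int z+1}"
  by auto

lemma closed_cube_pts: "closed (cube_pts q)"
  by (cases q) (simp only: cube_pts_Times, intro closed_Times closed_atLeastAtMost)

lemma closed_solid: "finite P \<Longrightarrow> closed (solid P)"
  unfolding solid_def by (intro closed_Union) (auto simp: closed_cube_pts)

lemma int_pin:
  fixes t :: real
  assumes "of_int i \<le> t" "t \<le> of_int i + 1" "of_int n < t" "t < of_int n + 1"
  shows "i = n"
proof -
  have "of_int i < (of_int (n+1)::real)" using assms by simp
  hence "i < n+1" by linarith
  moreover have "(of_int n::real) < of_int (i+1)" using assms by simp
  hence "n < i+1" by linarith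
  ultimately show ?thesis by simp
qed

lemma mem_solid: "p \<in> solid P \<longleftrightarrow> (\<exists>q\<in>P. p \<in> cube_pts q)"
  unfolding solid_def by auto

lemma not_in_solid:
  fixes x y z :: real
  assumes "of_int i < x" "x < of_int i + 1" "of_int j < y" "y < of_int j + 1"
    "of_int k < z" "z < of_int k + 1" "(i,j,k) \<notin> P"
  shows "(x,y,z) \<notin> solid P"
proof
  assume "(x,y,z) \<in> solid P"
  then obtain q where q: "q \<in> P" "(x,y,z) \<in> cube_pts q" by (auto simp: mem_solid)
  obtain a b c where qq: "q = (a,b,c)" by (cases q) auto
  from q qq have "a = i" "b = j" "c = k"
    using int_pin[of a x i] int_pin[of b y j] int_pin[of c z k] assms by auto
  with q qq assms show False by simp
qed

lemma not_interior:
  assumes "\<And>e. e > 0 \<Longrightarrow> \<exists>q. dist q p < e \<and> q \<notin> S"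
  shows "p \<notin> interior S"
proof
  assume "p \<in> interior S"
  then obtain e where "e > 0" "ball p e \<subseteq> S" using mem_interior by blast
  with assms[of e] show False by (metis mem_ball dist_commute subsetD)
qed

lemma pinch_canon:
  assumes pc: "polycube P" and A: "(a1,a2,a3) \<in> P" and B: "(a1+1,a2,a3+1) \<in> P"
    and N1: "(a1+1,a2,a3) \<notin> P" and N2: "(a1,a2,a3+1) \<notin> P"
  shows False
proof -
  define ax where "ax = (of_int a1::real)"
  define ay where "ay = (of_int a2::real)"
  define az where "az = (of_int a3::real)"
  define S where "S = solid P"
  define Fr where "Fr = frontier S"
  have fin: "finite P" using pc by (simp add: polycube_def)
  have clS: "closed S" using closed_solid[OF fin] by (simp add: S_def)
  have FrS: "Fr = S - interior S" using clS by (simp add: Fr_def frontier_def closure_closed)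
  have inA: "(x,y,z) \<in> S" if "ax \<le> x" "x \<le> ax+1" "ay \<le> y" "y \<le> ay+1" "az \<le> z" "z \<le> az+1" for x y z
    using that A unfolding S_def mem_solid ax_def ay_def az_def by (intro bexI[of _ "(a1,a2,a3)"]) auto
  have inB: "(x,y,z) \<in> S" if "ax+1 \<le> x" "x \<le> ax+2" "ay \<le> y" "y \<le> ay+1" "az+1 \<le> z" "z \<le> az+2" for x y z
    using that B unfolding S_def mem_solid ax_def ay_def az_def by (intro bexI[of _ "(a1+1,a2,a3+1)"]) auto
  have out1: "(x,y,z) \<notin> S" if "ax < x" "x < ax+1" "ay < y" "y < ay+1" "az+1 < z" "z < az+2" for x y z
    unfolding S_def using that N2 by (intro not_in_solid[of a1 x a2 y "a3+1" z]) (auto simp: ax_def ay_def az_def)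
  have out2: "(x,y,z) \<notin> S" if "ax+1 < x" "x < ax+2" "ay < y" "y < ay+1" "az < z" "z < az+1" for x y z
    unfolding S_def using that N1 by (intro not_in_solid[of "a1+1" x a2 y a3 z]) (auto simp: ax_def ay_def az_def)
  define D where "D = {p. snd (snd p) = az+1 \<and> ax+1/2 < fst p \<and> fst p < ax+3/2 \<and> ay < fst (snd p) \<and> fst (snd p) < ay+1}"
  define Pi where "Pi = {p::real\<times>real\<times>real. inner (0,0,1) p = az+1}"
  define T where "T = {p::real\<times>real\<times>real. inner (0,0,1) p = 0}"
  define Q where "Q s = (ax+1, ay+1/2, az+1-s)" for s :: real
  define x0 where "x0 = (ax+1, ay+1/2, az+1)"
  have DFr: "D \<subseteq> Fr"
  proof
    fix p assume "p \<in> D"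
    then obtain x y where p: "p = (x,y,az+1)" "ax+1/2 < x" "x < ax+3/2" "ay < y" "y < ay+1"
      unfolding D_def by (cases p) auto
    have "p \<in> S" using p inA[of x y "az+1"] inB[of x y "az+1"] by (cases "x \<le> ax+1") auto
    moreover have "p \<notin> interior S"
    proof (rule not_interior)
      fix e :: real assume e: "e > 0"
      define d where "d = min (e/4) (1/8)"
      have d: "d > 0" "d \<le> e/4" "d \<le> 1/8" using e by (auto simp: d_def)
      show "\<exists>q. dist q p < e \<and> q \<notin> S"
      proof (cases "x \<le> ax+1")
        case True
        have "dist (x-d,y,az+1+d) p \<le> \<bar>x-d-x\<bar> + \<bar>y-y\<bar> + \<bar>az+1+d-(az+1)\<bar>" unfolding p(1) by (rule dist3_le)
        moreover have "(x-d,y,az+1+d) \<notin> S" using True p d by (intro out1) auto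
        ultimately show ?thesis using d by (intro exI[of _ "(x-d,y,az+1+d)"]) auto
      next
        case False
        have "dist (x+d,y,az+1-d) p \<le> \<bar>x+d-x\<bar> + \<bar>y-y\<bar> + \<bar>az+1-d-(az+1)\<bar>" unfolding p(1) by (rule dist3_le)
        moreover have "(x+d,y,az+1-d) \<notin> S" using False p d by (intro out2) auto
        ultimately show ?thesis using d by (intro exI[of _ "(x+d,y,az+1-d)"]) auto
      qed
    qed
    ultimately show "p \<in> Fr" using FrS by simp
  qed
  have QFr: "Q s \<in> Fr" if s: "0 < s" "s < 1/2" for s
  proof -
    have "Q s \<in> S" unfolding Q_def using s by (intro inA) auto
    moreover have "Q s \<notin> interior S"
    proof (rule not_interior)
      fix e :: real assume e: "e > 0"
      define d where "d = min (e/4) (1/8)"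
      have d: "d > 0" "d \<le> e/4" "d \<le> 1/8" using e by (auto simp: d_def)
      have "dist (ax+1+d, ay+1/2, az+1-s) (Q s) \<le> \<bar>ax+1+d-(ax+1)\<bar> + \<bar>ay+1/2-(ay+1/2)\<bar> + \<bar>az+1-s-(az+1-s)\<bar>"
        unfolding Q_def by (rule dist3_le)
      moreover have "(ax+1+d, ay+1/2, az+1-s) \<notin> S" using s d by (intro out2) auto
      ultimately show "\<exists>q. dist q (Q s) < e \<and> q \<notin> S" using d
        by (intro exI[of _ "(ax+1+d, ay+1/2, az+1-s)"]) auto
    qed
    ultimately show ?thesis using FrS by simp
  qed
  define y0 where "y0 = Q (1/4)"
  have y0Fr: "y0 \<in> Fr" unfolding y0_def by (rule QFr) auto
  have y0D: "y0 \<notin> D" by (simp add: y0_def Q_def D_def)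
  obtain h k where hk: "homeomorphism Fr (sphere (0::real\<times>real\<times>real) 1) h k"
    using pc unfolding polycube_def Fr_def S_def homeomorphic_def by blast
  have hk2: "homeomorphism (Fr - {y0}) (sphere 0 1 - {h y0}) h k"
  proof (rule homeomorphism_of_subsets[OF hk])
    show "h ` (Fr - {y0}) = sphere 0 1 - {h y0}"
    proof -
      have inj: "inj_on h Fr" using hk unfolding homeomorphism_def by (metis inj_on_inverseI)
      have "h ` (Fr - {y0}) = h ` Fr - h ` {y0}" using y0Fr by (intro inj_on_image_set_diff[OF inj]) auto
      thus ?thesis using hk unfolding homeomorphism_def by simp
    qed
  qed auto
  have hy: "h y0 \<in> sphere 0 1" using hk y0Fr unfolding homeomorphism_def by auto
  have "sphere (0::real\<times>real\<times>real) 1 - {h y0} homeomorphic T"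
    unfolding T_def by (rule homeomorphic_punctured_sphere_hyperplane) (use hy in \<open>auto simp: zero_prod_def\<close>)
  hence "Fr - {y0} homeomorphic T"
    using hk2 homeomorphic_def homeomorphic_trans by blast
  then obtain g g' where gg: "homeomorphism (Fr - {y0}) T g g'" unfolding homeomorphic_def by blast
  have DsubF: "D \<subseteq> Fr - {y0}" using DFr y0D by auto
  have "openin (top_of_set T) (g ` D)"
  proof (rule invariance_of_domain_affine_sets[of Pi])
    define Bx where "Bx = {p::real\<times>real\<times>real. ax+1/2 < fst p \<and> fst p < ax+3/2 \<and> ay < fst (snd p) \<and> fst (snd p) < ay+1}"
    have DB: "D = Pi \<inter> Bx"
      by (auto simp: D_def Pi_def Bx_def)
    have "open Bx" unfolding Bx_def
      by (intro open_Collect_conj open_Collect_less continuous_intros)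
    hence "openin (top_of_set Pi) (Pi \<inter> Bx)" by (rule openin_open_Int)
    thus "openin (top_of_set Pi) D" by (simp only: DB)
    show "affine Pi" unfolding Pi_def by (rule affine_hyperplane)
    show "affine T" unfolding T_def by (rule affine_hyperplane)
    have nz: "(0,0,1) \<noteq> (0::real\<times>real\<times>real)" by (simp add: zero_prod_def)
    show "aff_dim T \<le> aff_dim Pi" unfolding T_def Pi_def by (simp only: aff_dim_hyperplane[OF nz])
    have gc: "continuous_on (Fr - {y0}) g" and gim: "g ` (Fr - {y0}) = T" using gg unfolding homeomorphism_def by auto
    show "continuous_on D g" using gc DsubF by (rule continuous_on_subset)
    show "g \<in> D \<rightarrow> T" using gim DsubF by blast
    have "inj_on g (Fr - {y0})" using gg unfolding homeomorphism_def by (metis inj_on_inverseI)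
    thus "inj_on g D" using DsubF by (rule inj_on_subset)
  qed
  hence "openin (top_of_set (Fr - {y0})) (g' ` g ` D)"
    using homeomorphism_imp_open_map[OF homeomorphism_symD[OF gg]] by blast
  moreover have "g' ` g ` D = D"
  proof -
    have "g' ` g ` D = (\<lambda>x. g' (g x)) ` D" by (simp add: image_image)
    also have "\<dots> = (\<lambda>x. x) ` D"
      by (rule image_cong) (use DsubF homeomorphism_apply1[OF gg] in auto)
    finally show ?thesis by simp
  qed
  ultimately have "openin (top_of_set (Fr - {y0})) D" by simp
  then obtain U where U: "open U" "D = (Fr - {y0}) \<inter> U" by (auto simp: openin_open)
  have "x0 \<in> D" by (simp add: x0_def D_def)
  hence "x0 \<in> U" using U by auto
  then obtain e where e: "e > 0" "ball x0 e \<subseteq> U" using U(1) open_contains_ball by blast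
  define s where "s = min (e/2) (1/8)"
  have s: "0 < s" "s < e" "s \<le> 1/8" using e by (auto simp: s_def)
  have "dist x0 (Q s) \<le> \<bar>ax+1-(ax+1)\<bar> + \<bar>ay+1/2-(ay+1/2)\<bar> + \<bar>az+1-(az+1-s)\<bar>"
    unfolding x0_def Q_def by (rule dist3_le)
  hence "Q s \<in> U" using s e by auto
  moreover have "Q s \<in> Fr" using s by (intro QFr) auto
  moreover have "Q s \<noteq> y0" using s by (auto simp: Q_def y0_def)
  ultimately have "Q s \<in> D" using U by auto
  thus False using s by (simp add: D_def Q_def)
qed


lemma polycube_image:
  fixes \<phi> :: "real\<times>real\<times>real \<Rightarrow> real\<times>real\<times>real"
  assumes pc: "polycube P" and lin: "linear \<phi>" and inj: "inj \<phi>"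
    and cub: "\<And>q. \<phi> ` cube_pts q = cube_pts (\<sigma> q)"
  shows "polycube (\<sigma> ` P)"
proof -
  have sol: "solid (\<sigma> ` P) = \<phi> ` solid P"
    unfolding solid_def by (auto simp: cub[symmetric] image_UN)
  have "frontier (\<phi> ` solid P) = \<phi> ` frontier (solid P)"
    unfolding frontier_def
    by (simp add: closure_injective_linear_image[OF lin inj, symmetric]
        interior_injective_linear_image[OF lin inj] image_set_diff[OF inj])
  hence "frontier (solid (\<sigma> ` P)) = \<phi> ` frontier (solid P)" by (simp add: sol)
  moreover have "\<phi> ` frontier (solid P) homeomorphic frontier (solid P)"
    using linear_homeomorphic_image[OF lin inj] homeomorphic_sym by blast
  ultimately have "frontier (solid (\<sigma> ` P)) homeomorphic sphere (0::real\<times>real\<times>real) 1"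
    using pc unfolding polycube_def by (metis homeomorphic_trans)
  thus ?thesis using pc unfolding polycube_def by auto
qed

lemma image_eqI2:
  assumes "\<And>x. x \<in> A \<Longrightarrow> f x \<in> B" "\<And>y. y \<in> B \<Longrightarrow> g y \<in> A \<and> f (g y) = y"
  shows "f ` A = B"
proof
  show "f ` A \<subseteq> B" using assms(1) by auto
  show "B \<subseteq> f ` A"
  proof
    fix y assume "y \<in> B"
    with assms(2)[of y] show "y \<in> f ` A" by (metis image_eqI)
  qed
qed

lemma pinch_gen:
  fixes \<phi> :: "real\<times>real\<times>real \<Rightarrow> real\<times>real\<times>real"
  assumes pc: "polycube P" and lin: "linear \<phi>" and inj: "inj \<phi>"
    and cub: "\<And>q. \<phi> ` cube_pts q = cube_pts (\<sigma> q)" and injs: "inj \<sigma>"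
    and A: "a \<in> P" and B: "b \<in> P" and N1: "n1 \<notin> P" and N2: "n2 \<notin> P"
    and e: "\<sigma> a = (a1,a2,a3)" "\<sigma> b = (a1+1,a2,a3+1)" "\<sigma> n1 = (a1+1,a2,a3)" "\<sigma> n2 = (a1,a2,a3+1)"
  shows False
proof -
  have pc': "polycube (\<sigma> ` P)" by (rule polycube_image[OF pc lin inj cub])
  show False
  proof (rule pinch_canon[OF pc'])
    show "(a1,a2,a3) \<in> \<sigma> ` P" using A e by (metis image_eqI)
    show "(a1+1,a2,a3+1) \<in> \<sigma> ` P" using B e by (metis image_eqI)
    show "(a1+1,a2,a3) \<notin> \<sigma> ` P" using N1 e injs by (metis inj_image_mem_iff)
    show "(a1,a2,a3+1) \<notin> \<sigma> ` P" using N2 e injs by (metis inj_image_mem_iff)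
  qed
qed

fun s1 :: "pt \<Rightarrow> pt" where "s1 (a,b,c) = (-a-1,b,c)"
fun f1 :: "real\<times>real\<times>real \<Rightarrow> real\<times>real\<times>real" where "f1 (x,y,z) = (-x,y,z)"
fun s2 :: "pt \<Rightarrow> pt" where "s2 (a,b,c) = (b,a,c)"
fun f2 :: "real\<times>real\<times>real \<Rightarrow> real\<times>real\<times>real" where "f2 (x,y,z) = (y,x,z)"
fun s3 :: "pt \<Rightarrow> pt" where "s3 (a,b,c) = (-b-1,a,c)"
fun f3 :: "real\<times>real\<times>real \<Rightarrow> real\<times>real\<times>real" where "f3 (x,y,z) = (-y,x,z)"
fun s4 :: "pt \<Rightarrow> pt" where "s4 (a,b,c) = (a,c,b)"
fun f4 :: "real\<times>real\<times>real \<Rightarrow> real\<times>real\<times>real" where "f4 (x,y,z) = (x,z,y)"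
fun s5 :: "pt \<Rightarrow> pt" where "s5 (a,b,c) = (a,c,-b-1)"
fun f5 :: "real\<times>real\<times>real \<Rightarrow> real\<times>real\<times>real" where "f5 (x,y,z) = (x,z,-y)"

lemma lin_f: "linear f1" "linear f2" "linear f3" "linear f4" "linear f5"
  by (auto intro!: linearI simp: split_paired_all)

lemma inj_f: "inj f1" "inj f2" "inj f3" "inj f4" "inj f5"
  by (auto intro!: injI simp: split_paired_all)

lemma inj_s: "inj s1" "inj s2" "inj s3" "inj s4" "inj s5"
  by (auto intro!: injI simp: split_paired_all)

lemma cub_f1: "f1 ` cube_pts q = cube_pts (s1 q)"
  by (cases q, simp, rule image_eqI2[where g=f1]) auto
lemma cub_f2: "f2 ` cube_pts q = cube_pts (s2 q)"
  by (cases q, simp, rule image_eqI2[where g=f2]) auto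
lemma cub_f3: "f3 ` cube_pts q = cube_pts (s3 q)"
  by (cases q, simp, rule image_eqI2[where g="\<lambda>(x,y,z). (y,-x,z)"]) auto
lemma cub_f4: "f4 ` cube_pts q = cube_pts (s4 q)"
  by (cases q, simp, rule image_eqI2[where g=f4]) auto
lemma cub_f5: "f5 ` cube_pts q = cube_pts (s5 q)"
  by (cases q, simp, rule image_eqI2[where g="\<lambda>(x,y,z). (x,-z,y)"]) auto

lemma pinch_V:
  assumes pc: "polycube P" and "a \<in> P" and e: "e \<in> {XP,XN,YP,YN}"
    and "padd a (dvec e) \<notin> P" and "padd a (0,0,1) \<notin> P" and "padd (padd a (dvec e)) (0,0,1) \<in> P"
  shows False
proof -
  obtain a1 a2 a3 where a: "a = (a1,a2,a3)" by (cases a) auto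
  show False using e
  proof (elim insertE emptyE)
    assume "e = XP" thus False using assms a by (intro pinch_canon[OF pc, of a1 a2 a3]) auto
  next
    assume "e = XN" thus False using assms a
      by (intro pinch_gen[OF pc lin_f(1) inj_f(1) cub_f1 inj_s(1), of a "(a1-1,a2,a3+1)" "(a1-1,a2,a3)" "(a1,a2,a3+1)" "-a1-1" a2 a3]) auto
  next
    assume "e = YP" thus False using assms a
      by (intro pinch_gen[OF pc lin_f(2) inj_f(2) cub_f2 inj_s(2), of a "(a1,a2+1,a3+1)" "(a1,a2+1,a3)" "(a1,a2,a3+1)" a2 a1 a3]) auto
  next
    assume "e = YN" thus False using assms a
      by (intro pinch_gen[OF pc lin_f(3) inj_f(3) cub_f3 inj_s(3), of a "(a1,a2-1,a3+1)" "(a1,a2-1,a3)" "(a1,a2,a3+1)" "-a2-1" a1 a3]) auto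
  qed
qed

lemma pinch_L1:
  assumes pc: "polycube P" and "(x,y,z) \<in> P" "(x+1,y+1,z) \<in> P"
  shows "(x+1,y,z) \<in> P \<or> (x,y+1,z) \<in> P"
  by (rule ccontr, rule pinch_gen[OF pc lin_f(4) inj_f(4) cub_f4 inj_s(4), of "(x,y,z)" "(x+1,y+1,z)" "(x+1,y,z)" "(x,y+1,z)" x z y]) (use assms in auto)

lemma pinch_L2:
  assumes pc: "polycube P" and "(x+1,y,z) \<in> P" "(x,y+1,z) \<in> P"
  shows "(x,y,z) \<in> P \<or> (x+1,y+1,z) \<in> P"
  by (rule ccontr, rule pinch_gen[OF pc lin_f(5) inj_f(5) cub_f5 inj_s(5), of "(x,y+1,z)" "(x+1,y,z)" "(x+1,y+1,z)" "(x,y,z)" x z "-y-2"]) (use assms in auto)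


lemma layer_solid_mem: "p \<in> layer_solid P i \<longleftrightarrow> (\<exists>c\<in>P. zc c = lvl P i \<and> p \<in> cube_pts c)"
  unfolding layer_solid_def by blast

lemma center_in_layer:
  assumes "(x,y,lvl P i) \<in> P"
  shows "(of_int x + 1/2 :: real, of_int y + 1/2 :: real, of_int (lvl P i) + 1/2) \<in> layer_solid P i"
  using assms unfolding layer_solid_mem by (intro bexI[of _ "(x,y,lvl P i)"]) auto

lemma center_layer_cube:
  assumes "(of_int x + 1/2 :: real, of_int y + 1/2 :: real, of_int (lvl P i) + 1/2) \<in> layer_solid P i"
  shows "(x,y,lvl P i) \<in> P"
proof -
  obtain c where c: "c \<in> P" "zc c = lvl P i" "(of_int x + 1/2 :: real, of_int y + 1/2 :: real, of_int (lvl P i) + 1/2) \<in> cube_pts c"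
    using assms unfolding layer_solid_mem by blast
  obtain a b d where cc: "c = (a,b,d)" by (cases c) auto
  have "a = x" using c cc by (intro int_pin[of a "of_int x + 1/2" x]) auto
  moreover have "b = y" using c cc by (intro int_pin[of b "of_int y + 1/2" y]) auto
  ultimately show ?thesis using c cc by simp
qed

lemma convex_x:
  assumes oc: "ortho_convex_layers P" and i: "1 \<le> i" "i \<le> num_m P"
    and p1: "(x1,y,lvl P i) \<in> P" and p2: "(x2,y,lvl P i) \<in> P" and x: "x1 \<le> x" "x \<le> x2"
  shows "(x,y,lvl P i) \<in> P"
proof (cases "x1 = x2")
  case True thus ?thesis using p1 x by simp
next
  case False
  hence lt: "x1 < x2" using x by simp
  define zr where "zr = (of_int (lvl P i)::real) + 1/2"
  define yr where "yr = (of_int y::real) + 1/2"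
  define q where "q = ((0::real), yr, zr)"
  define P1 where "P1 = (of_int x1 + 1/2 :: real, yr, zr)"
  define P2 where "P2 = (of_int x2 + 1/2 :: real, yr, zr)"
  define PX where "PX = (of_int x + 1/2 :: real, yr, zr)"
  have lineP: "(of_int t + 1/2 :: real, yr, zr) \<in> axis_line 0 q" for t
    unfolding axis_line_def q_def by (intro CollectI exI[of _ "of_int t + 1/2"]) simp
  have in1: "P1 \<in> layer_solid P i \<inter> axis_line 0 q"
    using center_in_layer[OF p1] lineP[of x1] by (simp add: P1_def yr_def zr_def)
  have in2: "P2 \<in> layer_solid P i \<inter> axis_line 0 q"
    using center_in_layer[OF p2] lineP[of x2] by (simp add: P2_def yr_def zr_def)
  have "layer_solid P i \<inter> axis_line 0 q = {} \<or> (\<exists>a b. layer_solid P i \<inter> axis_line 0 q = closed_segment a b)"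
  proof -
    have H: "\<forall>k<(3::nat). \<forall>q. layer_solid P i \<inter> axis_line k q = {} \<or> (\<exists>a b. layer_solid P i \<inter> axis_line k q = closed_segment a b)"
      using oc i unfolding ortho_convex_layers_def by blast
    show ?thesis using H[rule_format, of 0 q] by simp
  qed
  then obtain a b where ab: "layer_solid P i \<inter> axis_line 0 q = closed_segment a b" using in1 by blast
  have "closed_segment P1 P2 \<subseteq> closed_segment a b"
    using in1 in2 ab by (intro closed_segment_subset) auto
  moreover have "PX \<in> closed_segment P1 P2"
  proof -
    define u where "u = (of_int (x - x1) / of_int (x2 - x1) :: real)"
    have u: "0 \<le> u" "u \<le> 1" using x lt by (auto simp: u_def divide_simps)
    have nz: "(of_int x2 - of_int x1::real) \<noteq> 0" using lt by simp
    have ud: "u * (of_int x2 - of_int x1) = of_int x - of_int x1" using nz by (simp add: u_def)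
    have "(1 - u) * (of_int x1 + 1/2) + u * (of_int x2 + 1/2) = of_int x1 + 1/2 + u * (of_int x2 - of_int x1)"
      by (simp add: algebra_simps field_simps)
    also have "\<dots> = of_int x + 1/2" using ud by simp
    finally have "(1 - u) * (of_int x1 + 1/2) + u * (of_int x2 + 1/2) = (of_int x + 1/2::real)" .
    hence "PX = (1 - u) *\<^sub>R P1 + u *\<^sub>R P2"
      by (simp add: PX_def P1_def P2_def algebra_simps)
    thus ?thesis using u unfolding in_segment by blast
  qed
  ultimately have "PX \<in> layer_solid P i" using ab by auto
  thus ?thesis unfolding PX_def yr_def zr_def by (rule center_layer_cube)
qed

lemma convex_y:
  assumes oc: "ortho_convex_layers P" and i: "1 \<le> i" "i \<le> num_m P"
    and p1: "(x,y1,lvl P i) \<in> P" and p2: "(x,y2,lvl P i) \<in> P" and y: "y1 \<le> y" "y \<le> y2"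
  shows "(x,y,lvl P i) \<in> P"
proof (cases "y1 = y2")
  case True thus ?thesis using p1 y by simp
next
  case False
  hence lt: "y1 < y2" using y by simp
  define zr where "zr = (of_int (lvl P i)::real) + 1/2"
  define xr where "xr = (of_int x::real) + 1/2"
  define q where "q = (xr, (0::real), zr)"
  define P1 where "P1 = (xr, of_int y1 + 1/2 :: real, zr)"
  define P2 where "P2 = (xr, of_int y2 + 1/2 :: real, zr)"
  define PX where "PX = (xr, of_int y + 1/2 :: real, zr)"
  have lineP: "(xr, of_int t + 1/2 :: real, zr) \<in> axis_line 1 q" for t
    unfolding axis_line_def q_def by (intro CollectI exI[of _ "of_int t + 1/2"]) simp
  have in1: "P1 \<in> layer_solid P i \<inter> axis_line 1 q"
    using center_in_layer[OF p1] lineP[of y1] by (simp add: P1_def xr_def zr_def)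
  have in2: "P2 \<in> layer_solid P i \<inter> axis_line 1 q"
    using center_in_layer[OF p2] lineP[of y2] by (simp add: P2_def xr_def zr_def)
  have "layer_solid P i \<inter> axis_line 1 q = {} \<or> (\<exists>a b. layer_solid P i \<inter> axis_line 1 q = closed_segment a b)"
  proof -
    have H: "\<forall>k<(3::nat). \<forall>q. layer_solid P i \<inter> axis_line k q = {} \<or> (\<exists>a b. layer_solid P i \<inter> axis_line k q = closed_segment a b)"
      using oc i unfolding ortho_convex_layers_def by blast
    show ?thesis using H[rule_format, of 1 q] by simp
  qed
  then obtain a b where ab: "layer_solid P i \<inter> axis_line 1 q = closed_segment a b" using in1 by blast
  have "closed_segment P1 P2 \<subseteq> closed_segment a b"
    using in1 in2 ab by (intro closed_segment_subset) auto
  moreover have "PX \<in> closed_segment P1 P2"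
  proof -
    define u where "u = (of_int (y - y1) / of_int (y2 - y1) :: real)"
    have u: "0 \<le> u" "u \<le> 1" using y lt by (auto simp: u_def divide_simps)
    have nz: "(of_int y2 - of_int y1::real) \<noteq> 0" using lt by simp
    have ud: "u * (of_int y2 - of_int y1) = of_int y - of_int y1" using nz by (simp add: u_def)
    have "(1 - u) * (of_int y1 + 1/2) + u * (of_int y2 + 1/2) = of_int y1 + 1/2 + u * (of_int y2 - of_int y1)"
      by (simp add: algebra_simps field_simps)
    also have "\<dots> = of_int y + 1/2" using ud by simp
    finally have "(1 - u) * (of_int y1 + 1/2) + u * (of_int y2 + 1/2) = (of_int y + 1/2::real)" .
    hence "PX = (1 - u) *\<^sub>R P1 + u *\<^sub>R P2"
      by (simp add: PX_def P1_def P2_def algebra_simps)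
    thus ?thesis using u unfolding in_segment by blast
  qed
  ultimately have "PX \<in> layer_solid P i" using ab by auto
  thus ?thesis unfolding PX_def xr_def zr_def by (rule center_layer_cube)
qed


lemma real_int_le: "(of_int a::real) \<le> of_int b + 1 \<Longrightarrow> a \<le> b + 1"
  by linarith

lemma row_conn:
  assumes pc: "polycube P" and cl: "connected_layers P" and i: "1 \<le> i" "i \<le> num_m P"
    and p1: "(x1,y1,lvl P i) \<in> P" and p2: "(x2,y2,lvl P i) \<in> P" and y: "y1 \<le> y" "y < y2"
  shows "\<exists>x. (x,y,lvl P i) \<in> P \<and> (x,y+1,lvl P i) \<in> P"
proof (rule ccontr)
  assume nx: "\<not> ?thesis"
  define zz where "zz = lvl P i"
  define A where "A = solid {c\<in>P. zc c = zz \<and> fst (snd c) \<le> y}"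
  define B where "B = solid {c\<in>P. zc c = zz \<and> fst (snd c) \<ge> y+1}"
  have fin: "finite P" using pc by (simp add: polycube_def)
  have cA: "closed A" unfolding A_def by (rule closed_solid) (use fin in auto)
  have cB: "closed B" unfolding B_def by (rule closed_solid) (use fin in auto)
  have LS: "layer_solid P i = solid {c\<in>P. zc c = zz}" by (simp add: layer_solid_def solid_def zz_def)
  have sub: "layer_solid P i \<subseteq> A \<union> B"
  proof
    fix p assume "p \<in> layer_solid P i"
    then obtain c where c: "c \<in> P" "zc c = zz" "p \<in> cube_pts c" unfolding LS mem_solid by blast
    show "p \<in> A \<union> B"
    proof (cases "fst (snd c) \<le> y")
      case True
      have "p \<in> A" using True c unfolding A_def mem_solid by blast
      thus ?thesis by blast
    next
      case False
      have "fst (snd c) \<ge> y+1" using False by simp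
      hence "p \<in> B" using c unfolding B_def mem_solid by blast
      thus ?thesis by blast
    qed
  qed
  have disj: "A \<inter> B \<inter> layer_solid P i = {}"
  proof (rule ccontr)
    assume "A \<inter> B \<inter> layer_solid P i \<noteq> {}"
    then obtain p where pA: "p \<in> A" and pB: "p \<in> B" by blast
    obtain c where c: "c \<in> P" "zc c = zz" "fst (snd c) \<le> y" "p \<in> cube_pts c"
      using pA unfolding A_def mem_solid by blast
    obtain c' where c': "c' \<in> P" "zc c' = zz" "fst (snd c') \<ge> y+1" "p \<in> cube_pts c'"
      using pB unfolding B_def mem_solid by blast
    obtain a b where cc: "c = (a,b,zz)" using c(2) by (cases c) auto
    obtain a' b' where cc': "c' = (a',b',zz)" using c'(2) by (cases c') auto
    obtain px py pz where pp: "p = (px,py,pz)" by (cases p) auto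
    have "b' \<le> b + 1" using c(4) c'(4) cc cc' pp by (intro real_int_le) auto
    hence bb: "b = y" "b' = y + 1" using c(3) c'(3) cc cc' by auto
    have a1: "a' \<le> a + 1" using c(4) c'(4) cc cc' pp by (intro real_int_le) auto
    have a2: "a \<le> a' + 1" using c(4) c'(4) cc cc' pp by (intro real_int_le) auto
    have inA: "(a,y,zz) \<in> P" and inB: "(a',y+1,zz) \<in> P" using c c' cc cc' bb by auto
    consider "a' = a" | "a' = a + 1" | "a' = a - 1" using a1 a2 by linarith
    thus False
    proof cases
      case 1 thus False using nx inA inB zz_def by auto
    next
      case 2
      have "(a+1,y,zz) \<in> P \<or> (a,y+1,zz) \<in> P" using pinch_L1[OF pc inA] inB 2 by simp
      thus False using nx inA inB 2 zz_def by auto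
    next
      case 3
      have "(a-1,y,zz) \<in> P \<or> (a-1+1,y+1,zz) \<in> P" using pinch_L2[OF pc, of "a-1" y zz] inA inB 3 by simp
      thus False using nx inA inB 3 zz_def by auto
    qed
  qed
  have neA: "A \<inter> layer_solid P i \<noteq> {}"
  proof -
    have cp: "(of_int x1, of_int y1, of_int zz) \<in> cube_pts (x1,y1,zz)" by simp
    have "(of_int x1, of_int y1, of_int zz) \<in> A" unfolding A_def mem_solid
      by (rule bexI[of _ "(x1,y1,zz)"]) (use cp p1 y zz_def in auto)
    moreover have "(of_int x1, of_int y1, of_int zz) \<in> layer_solid P i" unfolding LS mem_solid
      by (rule bexI[of _ "(x1,y1,zz)"]) (use cp p1 y zz_def in auto)
    ultimately have "(of_int x1, of_int y1, of_int zz) \<in> A \<inter> layer_solid P i" by blast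
    thus ?thesis by blast
  qed
  have neB: "B \<inter> layer_solid P i \<noteq> {}"
  proof -
    have cp: "(of_int x2, of_int y2, of_int zz) \<in> cube_pts (x2,y2,zz)" by simp
    have "(of_int x2, of_int y2, of_int zz) \<in> B" unfolding B_def mem_solid
      by (rule bexI[of _ "(x2,y2,zz)"]) (use cp p2 y zz_def in auto)
    moreover have "(of_int x2, of_int y2, of_int zz) \<in> layer_solid P i" unfolding LS mem_solid
      by (rule bexI[of _ "(x2,y2,zz)"]) (use cp p2 y zz_def in auto)
    ultimately have "(of_int x2, of_int y2, of_int zz) \<in> B \<inter> layer_solid P i" by blast
    thus ?thesis by blast
  qed
  have "connected (layer_solid P i)" using cl i unfolding connected_layers_def by blast
  thus False unfolding connected_closed using cA cB sub disj neA neB by blast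
qed


lemma band_iff: "((x,y,z),d) \<in> band P i \<longleftrightarrow> (x,y,z) \<in> P \<and> d \<in> {XP,XN,YP,YN} \<and> z = lvl P i \<and> padd (x,y,z) (dvec d) \<notin> P"
  by (auto simp: band_def surface_cell_def horiz_def)

lemma bnext_band:
  assumes "r \<in> band P i" shows "bnext P p r \<in> band P i"
proof -
  obtain x y z d where r: "r = ((x,y,z),d)" by (cases r) auto
  show ?thesis using assms unfolding r band_iff
    by (cases p; cases d) (auto simp: Let_def band_iff)
qed

lemma bnext_inv:
  assumes "r \<in> band P i" shows "bnext P (flip p) (bnext P p r) = r"
proof -
  obtain x y z d where r: "r = ((x,y,z),d)" by (cases r) auto
  show ?thesis using assms unfolding r band_iff
    by (cases p; cases d) (auto simp: Let_def)
qed


fun lexlt :: "int\<times>int\<times>int\<times>int \<Rightarrow> int\<times>int\<times>int\<times>int \<Rightarrow> bool" where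
  "lexlt (a1,b1,c1,d1) (a2,b2,c2,d2) \<longleftrightarrow>
     a1 < a2 \<or> (a1 = a2 \<and> (b1 < b2 \<or> (b1 = b2 \<and> (c1 < c2 \<or> (c1 = c2 \<and> d1 < d2)))))"

lemma lexlt_trans: "lexlt u v \<Longrightarrow> lexlt v w \<Longrightarrow> lexlt u w"
  by (cases u; cases v; cases w) (auto simp: lexlt.simps)

lemma lexlt_irrefl: "\<not> lexlt u u"
  by (cases u) (auto simp: lexlt.simps)

locale layer =
  fixes P :: "pt set" and zz :: int
  assumes fin: "finite P"
    and cx: "\<And>x1 x2 x y. (x1,y,zz) \<in> P \<Longrightarrow> (x2,y,zz) \<in> P \<Longrightarrow> x1 \<le> x \<Longrightarrow> x \<le> x2 \<Longrightarrow> (x,y,zz) \<in> P"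
    and conn: "\<And>x1 y1 x2 y2 y. (x1,y1,zz) \<in> P \<Longrightarrow> (x2,y2,zz) \<in> P \<Longrightarrow> y1 \<le> y \<Longrightarrow> y < y2 \<Longrightarrow>
                  \<exists>x. (x,y,zz) \<in> P \<and> (x,y+1,zz) \<in> P"
    and ne: "\<exists>x y. (x,y,zz) \<in> P"
begin

definition row :: "int \<Rightarrow> int set" where "row y = {x. (x,y,zz) \<in> P}"
definition ys :: "int set" where "ys = {y. \<exists>x. (x,y,zz) \<in> P}"
definition ylo where "ylo = Min ys"
definition yhi where "yhi = Max ys"
definition ra where "ra y = Min (row y)"
definition rb where "rb y = Max (row y)"

lemma fin_row: "finite (row y)"
proof -
  have "row y \<subseteq> fst ` P" unfolding row_def by (auto intro: image_eqI[where x="(_,y,zz)"])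
  thus ?thesis using fin finite_subset by blast
qed

lemma fin_ys: "finite ys"
proof -
  have "ys \<subseteq> (\<lambda>c. fst (snd c)) ` P" unfolding ys_def by (auto intro: image_eqI[where x="(_,_,zz)"])
  thus ?thesis using fin finite_subset by blast
qed

lemma ys_ne: "ys \<noteq> {}" using ne unfolding ys_def by auto

lemma F1: "(x,y,zz) \<in> P \<Longrightarrow> ylo \<le> y \<and> y \<le> yhi \<and> ra y \<le> x \<and> x \<le> rb y"
proof -
  assume h: "(x,y,zz) \<in> P"
  have "y \<in> ys" using h by (auto simp: ys_def)
  moreover have "x \<in> row y" using h by (simp add: row_def)
  ultimately show ?thesis using fin_ys fin_row
    by (auto simp: ylo_def yhi_def ra_def rb_def)
qed

lemma row_ne: assumes "ylo \<le> y" "y \<le> yhi" shows "\<exists>x. (x,y,zz) \<in> P"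
proof -
  have "ylo \<in> ys" "yhi \<in> ys" using fin_ys ys_ne by (auto simp: ylo_def yhi_def)
  then obtain x1 x2 where p1: "(x1,ylo,zz) \<in> P" and p2: "(x2,yhi,zz) \<in> P" by (auto simp: ys_def)
  show ?thesis
  proof (cases "y = yhi")
    case True thus ?thesis using p2 by blast
  next
    case False thus ?thesis using conn[OF p1 p2, of y] assms by auto
  qed
qed

lemma memP: assumes "ylo \<le> y" "y \<le> yhi" shows "(x,y,zz) \<in> P \<longleftrightarrow> ra y \<le> x \<and> x \<le> rb y"
proof -
  obtain x0 where "(x0,y,zz) \<in> P" using row_ne assms by blast
  hence "row y \<noteq> {}" by (auto simp: row_def)
  hence "ra y \<in> row y" "rb y \<in> row y" using fin_row by (auto simp: ra_def rb_def)
  hence "(ra y,y,zz) \<in> P" "(rb y,y,zz) \<in> P" by (auto simp: row_def)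
  thus ?thesis using F1 cx by blast
qed

lemma notP: assumes "y < ylo \<or> yhi < y" shows "(x,y,zz) \<notin> P"
proof
  assume "(x,y,zz) \<in> P"
  hence "ylo \<le> y \<and> y \<le> yhi" using F1 by blast
  thus False using assms by linarith
qed

lemma ab: assumes "ylo \<le> y" "y \<le> yhi" shows "ra y \<le> rb y"
proof -
  obtain x0 where "(x0,y,zz) \<in> P" using row_ne assms by blast
  hence "ra y \<le> x0 \<and> x0 \<le> rb y" using F1 by blast
  thus ?thesis by linarith
qed

lemma overlap: assumes "ylo \<le> y" "y < yhi" shows "ra y \<le> rb (y+1)" "ra (y+1) \<le> rb y"
proof -
  have "ylo \<in> ys" "yhi \<in> ys" using fin_ys ys_ne by (auto simp: ylo_def yhi_def)
  then obtain x1 x2 where p1: "(x1,ylo,zz) \<in> P" and p2: "(x2,yhi,zz) \<in> P" by (auto simp: ys_def)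
  obtain x where q: "(x,y,zz) \<in> P" "(x,y+1,zz) \<in> P" using conn[OF p1 p2, of y] assms by auto
  have "ra y \<le> x \<and> x \<le> rb y" using F1[OF q(1)] by blast
  moreover have "ra (y+1) \<le> x \<and> x \<le> rb (y+1)" using F1[OF q(2)] by blast
  ultimately show "ra y \<le> rb (y+1)" "ra (y+1) \<le> rb y" by linarith+
qed

definition key :: "cell \<Rightarrow> int\<times>int\<times>int\<times>int" where
  "key c = (case c of ((x,y,z),d) \<Rightarrow> (case d of
     YN \<Rightarrow> if y = ylo then (0,0,0,x) else if rb (y-1) < x then (1,y,0,x) else (3,-y,2,x)
   | XP \<Rightarrow> (1,y,1,0)
   | YP \<Rightarrow> if y = yhi then (2,0,0,-x) else if rb (y+1) < x then (1,y,2,-x) else (3,-y,0,-x)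
   | XN \<Rightarrow> (3,-y,1,0)
   | _ \<Rightarrow> (0,0,0,0)))"

end


lemma bn_YN: "bnext P CCW ((x,y,z),YN) = (if (x+1,y-1,z) \<in> P then ((x+1,y-1,z),XN) else if (x+1,y,z) \<in> P then ((x+1,y,z),YN) else ((x,y,z),XP))"
  by (simp add: Let_def)
lemma bn_XP: "bnext P CCW ((x,y,z),XP) = (if (x+1,y+1,z) \<in> P then ((x+1,y+1,z),YN) else if (x,y+1,z) \<in> P then ((x,y+1,z),XP) else ((x,y,z),YP))"
  by (simp add: Let_def)
lemma bn_YP: "bnext P CCW ((x,y,z),YP) = (if (x-1,y+1,z) \<in> P then ((x-1,y+1,z),XP) else if (x-1,y,z) \<in> P then ((x-1,y,z),YP) else ((x,y,z),XN))"
  by (simp add: Let_def)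
lemma bn_XN: "bnext P CCW ((x,y,z),XN) = (if (x-1,y-1,z) \<in> P then ((x-1,y-1,z),YP) else if (x,y-1,z) \<in> P then ((x,y-1,z),XN) else ((x,y,z),YN))"
  by (simp add: Let_def)

context layer
begin

lemma key_YN: "key ((x,y,z),YN) = (if y = ylo then (0,0,0,x) else if rb (y-1) < x then (1,y,0,x) else (3,-y,2,x))"
  by (simp add: key_def)
lemma key_XP: "key ((x,y,z),XP) = (1,y,1,0)" by (simp add: key_def)
lemma key_YP: "key ((x,y,z),YP) = (if y = yhi then (2,0,0,-x) else if rb (y+1) < x then (1,y,2,-x) else (3,-y,0,-x))"
  by (simp add: key_def)
lemma key_XN: "key ((x,y,z),XN) = (3,-y,1,0)" by (simp add: key_def)

lemma step_YN:
  assumes h: "(x,y,zz) \<in> P" "(x,y-1,zz) \<notin> P"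
  shows "lexlt (key ((x,y,zz),YN)) (key (bnext P CCW ((x,y,zz),YN)))"
proof -
  have y: "ylo \<le> y" "y \<le> yhi" using F1[OF h(1)] by auto
  have xr: "ra y \<le> x" "x \<le> rb y" using F1[OF h(1)] by auto
  show ?thesis
  proof (cases "y = ylo")
    case True
    hence n1: "(x+1,y-1,zz) \<notin> P" by (intro notP) simp
    show ?thesis
    proof (cases "(x+1,y,zz) \<in> P")
      case True
      thus ?thesis using n1 \<open>y = ylo\<close> unfolding bn_YN by (simp add: key_YN key_XP key_XN key_YP)
    next
      case False
      thus ?thesis using n1 \<open>y = ylo\<close> unfolding bn_YN by (simp add: key_YN key_XP key_XN key_YP)
    qed
  next
    case False
    hence y1: "ylo \<le> y-1" "y-1 < yhi" using y by auto
    have ov: "ra (y-1) \<le> rb y" "ra y \<le> rb (y-1)" using overlap[OF y1] by auto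
    have y1': "y - 1 \<le> yhi" using y1 by simp
    note m1 = memP[OF y1(1) y1']
    note m0 = memP[OF y]
    have "\<not> (ra (y-1) \<le> x \<and> x \<le> rb (y-1))" using h(2) m1[of x] by simp
    hence c: "x < ra (y-1) \<or> rb (y-1) < x" by linarith
    show ?thesis
    proof (cases "(x+1,y-1,zz) \<in> P")
      case True
      hence "ra (y-1) \<le> x+1 \<and> x+1 \<le> rb (y-1)" using m1[of "x+1"] by simp
      hence "\<not> rb (y-1) < x" by linarith
      thus ?thesis using True False unfolding bn_YN by (simp add: key_YN key_XP key_XN key_YP)
    next
      case n1: False
      show ?thesis
      proof (cases "(x+1,y,zz) \<in> P")
        case True
        have n1a: "\<not> (ra (y-1) \<le> x+1 \<and> x+1 \<le> rb (y-1))" using n1 m1[of "x+1"] by simp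
        have "rb (y-1) < x \<longleftrightarrow> rb (y-1) < x + 1" using n1a c ab[OF y1(1) y1'] by linarith
        thus ?thesis using True n1 False unfolding bn_YN by (simp add: key_YN key_XP key_XN key_YP)
      next
        case n2: False
        have n1a: "\<not> (ra (y-1) \<le> x+1 \<and> x+1 \<le> rb (y-1))" using n1 m1[of "x+1"] by simp
        have n2a: "\<not> (ra y \<le> x+1 \<and> x+1 \<le> rb y)" using n2 m0[of "x+1"] by simp
        have "rb (y-1) < x" using c n1a n2a ov xr by linarith
        thus ?thesis using n1 n2 False unfolding bn_YN by (simp add: key_YN key_XP key_XN key_YP)
      qed
    qed
  qed
qed

lemma step_XP:
  assumes h: "(x,y,zz) \<in> P" "(x+1,y,zz) \<notin> P"
  shows "lexlt (key ((x,y,zz),XP)) (key (bnext P CCW ((x,y,zz),XP)))"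
proof -
  have y: "ylo \<le> y" "y \<le> yhi" using F1[OF h(1)] by auto
  have xr: "ra y \<le> x" "x \<le> rb y" using F1[OF h(1)] by auto
  note m0 = memP[OF y]
  have "\<not> (ra y \<le> x+1 \<and> x+1 \<le> rb y)" using h(2) m0[of "x+1"] by simp
  hence xb: "x = rb y" using xr by linarith
  show ?thesis
  proof (cases "y = yhi")
    case True
    hence "(x+1,y+1,zz) \<notin> P" "(x,y+1,zz) \<notin> P" by (intro notP; simp)+
    thus ?thesis using True unfolding bn_XP by (simp add: key_YN key_XP key_XN key_YP)
  next
    case False
    hence y1: "ylo \<le> y+1" "y+1 \<le> yhi" "y < yhi" using y by auto
    have ov: "ra y \<le> rb (y+1)" "ra (y+1) \<le> rb y" using overlap[OF y(1) y1(3)] by auto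
    note m1 = memP[OF y1(1,2)]
    have ny: "y + 1 \<noteq> ylo" using y by simp
    show ?thesis
    proof (cases "(x+1,y+1,zz) \<in> P")
      case True
      have "rb y < x + 1" using xb by simp
      thus ?thesis using True ny unfolding bn_XP by (simp add: key_YN key_XP key_XN key_YP)
    next
      case n1: False
      show ?thesis
      proof (cases "(x,y+1,zz) \<in> P")
        case True
        thus ?thesis using n1 unfolding bn_XP by (simp add: key_YN key_XP key_XN key_YP)
      next
        case n2: False
        have "\<not> (ra (y+1) \<le> x \<and> x \<le> rb (y+1))" using n2 m1[of x] by simp
        hence "rb (y+1) < x" using ov xb by linarith
        thus ?thesis using n1 n2 False unfolding bn_XP by (simp add: key_YN key_XP key_XN key_YP)
      qed
    qed
  qed
qed

lemma step_YP:
  assumes h: "(x,y,zz) \<in> P" "(x,y+1,zz) \<notin> P"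
  shows "lexlt (key ((x,y,zz),YP)) (key (bnext P CCW ((x,y,zz),YP)))"
proof -
  have y: "ylo \<le> y" "y \<le> yhi" using F1[OF h(1)] by auto
  have xr: "ra y \<le> x" "x \<le> rb y" using F1[OF h(1)] by auto
  note m0 = memP[OF y]
  show ?thesis
  proof (cases "y = yhi")
    case True
    hence n1: "(x-1,y+1,zz) \<notin> P" by (intro notP) simp
    show ?thesis
    proof (cases "(x-1,y,zz) \<in> P")
      case True
      thus ?thesis using n1 \<open>y = yhi\<close> unfolding bn_YP by (simp add: key_YN key_XP key_XN key_YP)
    next
      case False
      thus ?thesis using n1 \<open>y = yhi\<close> unfolding bn_YP by (simp add: key_YN key_XP key_XN key_YP)
    qed
  next
    case False
    hence y1: "ylo \<le> y+1" "y+1 \<le> yhi" "y < yhi" using y by auto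
    have ov: "ra y \<le> rb (y+1)" "ra (y+1) \<le> rb y" using overlap[OF y(1) y1(3)] by auto
    note m1 = memP[OF y1(1,2)]
    have ab1: "ra (y+1) \<le> rb (y+1)" using ab[OF y1(1,2)] .
    have "\<not> (ra (y+1) \<le> x \<and> x \<le> rb (y+1))" using h(2) m1[of x] by simp
    hence c: "x < ra (y+1) \<or> rb (y+1) < x" by linarith
    show ?thesis
    proof (cases "(x-1,y+1,zz) \<in> P")
      case True
      hence "ra (y+1) \<le> x-1 \<and> x-1 \<le> rb (y+1)" using m1[of "x-1"] by simp
      hence "rb (y+1) < x" using c by linarith
      thus ?thesis using True False unfolding bn_YP by (simp add: key_YN key_XP key_XN key_YP)
    next
      case n1: False
      have n1a: "\<not> (ra (y+1) \<le> x-1 \<and> x-1 \<le> rb (y+1))" using n1 m1[of "x-1"] by simp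
      show ?thesis
      proof (cases "(x-1,y,zz) \<in> P")
        case True
        have "rb (y+1) < x \<longleftrightarrow> rb (y+1) < x - 1" using n1a c ab1 by linarith
        thus ?thesis using True n1 False unfolding bn_YP by (simp add: key_YN key_XP key_XN key_YP)
      next
        case n2: False
        have n2a: "\<not> (ra y \<le> x-1 \<and> x-1 \<le> rb y)" using n2 m0[of "x-1"] by simp
        have "\<not> rb (y+1) < x" using n2a xr ov by linarith
        thus ?thesis using n1 n2 False unfolding bn_YP by (simp add: key_YN key_XP key_XN key_YP)
      qed
    qed
  qed
qed

lemma step_XN:
  assumes h: "(x,y,zz) \<in> P" "(x-1,y,zz) \<notin> P" "y \<noteq> ylo"
  shows "lexlt (key ((x,y,zz),XN)) (key (bnext P CCW ((x,y,zz),XN)))"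
proof -
  have y: "ylo \<le> y" "y \<le> yhi" using F1[OF h(1)] by auto
  have xr: "ra y \<le> x" "x \<le> rb y" using F1[OF h(1)] by auto
  note m0 = memP[OF y]
  have "\<not> (ra y \<le> x-1 \<and> x-1 \<le> rb y)" using h(2) m0[of "x-1"] by simp
  hence xa: "x = ra y" using xr by linarith
  have y1: "ylo \<le> y-1" "y-1 < yhi" using y h(3) by auto
  have ov: "ra (y-1) \<le> rb y" "ra y \<le> rb (y-1)" using overlap[OF y1] by auto
  have ny: "y - 1 \<noteq> yhi" using y by simp
  show ?thesis
  proof (cases "(x-1,y-1,zz) \<in> P")
    case True
    have "\<not> rb y < x - 1" using xr by simp
    thus ?thesis using True ny unfolding bn_XN by (simp add: key_YN key_XP key_XN key_YP)
  next
    case n1: False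
    show ?thesis
    proof (cases "(x,y-1,zz) \<in> P")
      case True
      thus ?thesis using n1 unfolding bn_XN by (simp add: key_YN key_XP key_XN key_YP)
    next
      case n2: False
      have "\<not> rb (y-1) < x" using xa ov by linarith
      thus ?thesis using n1 n2 h(3) unfolding bn_XN by (simp add: key_YN key_XP key_XN key_YP)
    qed
  qed
qed

definition Tprev :: cell where "Tprev = ((ra ylo, ylo, zz), XN)"

lemma band_fin: "finite (band P i)"
proof -
  have "band P i \<subseteq> P \<times> {XP,XN,YP,YN}" by (auto simp: band_def surface_cell_def horiz_def)
  moreover have "finite (P \<times> {XP,XN,YP,YN})" using fin by simp
  ultimately show ?thesis by (rule finite_subset)
qed

lemma step_any:
  assumes zl: "zz = lvl P i" and c: "c \<in> band P i" and nt: "c \<noteq> Tprev"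
  shows "lexlt (key c) (key (bnext P CCW c))"
proof -
  obtain x y z d where cc: "c = ((x,y,z),d)" by (cases c) auto
  have h: "(x,y,zz) \<in> P" "d \<in> {XP,XN,YP,YN}" "z = zz" "padd (x,y,z) (dvec d) \<notin> P"
    using c zl unfolding cc band_iff by auto
  show ?thesis using h(2)
  proof (elim insertE emptyE)
    assume "d = XP" thus ?thesis using h step_XP[of x y] cc by simp
  next
    assume "d = YP" thus ?thesis using h step_YP[of x y] cc by simp
  next
    assume "d = YN" thus ?thesis using h step_YN[of x y] cc by simp
  next
    assume d: "d = XN"
    have n: "(x-1,y,zz) \<notin> P" using h d by simp
    have "y \<noteq> ylo"
    proof
      assume yl: "y = ylo"
      have y: "ylo \<le> y" "y \<le> yhi" using F1[OF h(1)] by auto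
      have xr: "ra y \<le> x" "x \<le> rb y" using F1[OF h(1)] by auto
      have "\<not> (ra y \<le> x-1 \<and> x-1 \<le> rb y)" using n memP[OF y, of "x-1"] by simp
      hence "x = ra y" using xr by linarith
      hence "c = Tprev" using yl cc d h by (simp add: Tprev_def)
      thus False using nt by simp
    qed
    thus ?thesis using h n step_XN[of x y] cc d by simp
  qed
qed

lemma reach_Tprev:
  assumes zl: "zz = lvl P i"
  shows "c \<in> band P i \<Longrightarrow> \<exists>k. (bnext P CCW ^^ k) c = Tprev"
proof (induction "card {c' \<in> band P i. lexlt (key c) (key c')}" arbitrary: c rule: less_induct)
  case less
  show ?case
  proof (cases "c = Tprev")
    case True thus ?thesis by (intro exI[of _ 0]) simp
  next
    case False
    define c' where "c' = bnext P CCW c"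
    have c'b: "c' \<in> band P i" unfolding c'_def by (rule bnext_band[OF less.prems])
    have lt: "lexlt (key c) (key c')" unfolding c'_def by (rule step_any[OF zl less.prems False])
    have sub: "{c'' \<in> band P i. lexlt (key c') (key c'')} \<subset> {c'' \<in> band P i. lexlt (key c) (key c'')}"
    proof
      show "{c'' \<in> band P i. lexlt (key c') (key c'')} \<subseteq> {c'' \<in> band P i. lexlt (key c) (key c'')}"
        using lt lexlt_trans by blast
      have "c' \<in> {c'' \<in> band P i. lexlt (key c) (key c'')}" using c'b lt by simp
      moreover have "c' \<notin> {c'' \<in> band P i. lexlt (key c') (key c'')}" using lexlt_irrefl by simp
      ultimately show "{c'' \<in> band P i. lexlt (key c') (key c'')} \<noteq> {c'' \<in> band P i. lexlt (key c) (key c'')}" by blast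
    qed
    have "card {c'' \<in> band P i. lexlt (key c') (key c'')} < card {c'' \<in> band P i. lexlt (key c) (key c'')}"
      using sub band_fin by (intro psubset_card_mono) auto
    then obtain k where "(bnext P CCW ^^ k) c' = Tprev" using less.hyps c'b by blast
    hence "(bnext P CCW ^^ Suc k) c = Tprev" unfolding c'_def by (simp add: funpow_Suc_right del: funpow.simps)
    thus ?thesis by blast
  qed
qed

lemma Tprev_band: assumes zl: "zz = lvl P i" shows "Tprev \<in> band P i"
proof -
  have "ylo \<in> ys" using fin_ys ys_ne by (auto simp: ylo_def)
  hence y: "ylo \<le> ylo" "ylo \<le> yhi" using fin_ys by (auto simp: yhi_def)
  have ab0: "ra ylo \<le> rb ylo" by (rule ab[OF y])
  have "(ra ylo, ylo, zz) \<in> P" using memP[OF y] ab0 by simp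
  moreover have "(ra ylo - 1, ylo, zz) \<notin> P" using memP[OF y] by simp
  ultimately show ?thesis using zl unfolding Tprev_def band_iff by simp
qed

end


lemma funpow_in: "x \<in> S \<Longrightarrow> (\<And>y. y \<in> S \<Longrightarrow> f y \<in> S) \<Longrightarrow> (f ^^ n) x \<in> S"
  by (induction n) auto

lemma funpow_add': "(f ^^ (m + n)) x = (f ^^ m) ((f ^^ n) x)"
  by (simp add: funpow_add)

lemma periodic:
  assumes fin: "finite S" and cl: "\<And>y. y \<in> S \<Longrightarrow> f y \<in> S" and inj: "inj_on f S" and x: "x \<in> S"
  shows "\<exists>p>0. (f ^^ p) x = x"
proof -
  have "\<not> inj_on (\<lambda>n. (f ^^ n) x) {0..card S}"
  proof
    assume "inj_on (\<lambda>n. (f ^^ n) x) {0..card S}"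
    moreover have "(\<lambda>n. (f ^^ n) x) ` {0..card S} \<subseteq> S" using funpow_in[of x S f, OF x cl] by auto
    ultimately have "card {0..card S} \<le> card S" by (rule card_inj_on_le[OF _ _ fin])
    thus False by simp
  qed
  then obtain a b where ab: "a \<le> card S" "b \<le> card S" "a \<noteq> b" "(f ^^ a) x = (f ^^ b) x"
    unfolding inj_on_def by auto
  have canc: "(f ^^ a) x = (f ^^ b) x \<Longrightarrow> a < b \<Longrightarrow> x = (f ^^ (b - a)) x" for a b
  proof (induction a arbitrary: b)
    case 0 thus ?case by simp
  next
    case (Suc a)
    obtain b' where b: "b = Suc b'" using Suc.prems by (cases b) auto
    have "f ((f ^^ a) x) = f ((f ^^ b') x)" using Suc.prems b by simp
    hence "(f ^^ a) x = (f ^^ b') x"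
      by (rule inj_onD[OF inj _ funpow_in[of x S f, OF x cl] funpow_in[of x S f, OF x cl]])
    thus ?case using Suc.IH[of b'] Suc.prems b by simp
  qed
  show ?thesis
  proof (cases "a < b")
    case True thus ?thesis using canc[OF ab(4)] by (intro exI[of _ "b - a"]) auto
  next
    case False
    hence "b < a" using ab by simp
    thus ?thesis using canc[OF ab(4)[symmetric]] by (intro exI[of _ "a - b"]) auto
  qed
qed

lemma funpow_mult_fix: "(f ^^ p) x = x \<Longrightarrow> (f ^^ (p * q)) x = x"
proof (induction q)
  case 0 thus ?case by simp
next
  case (Suc q)
  have "(f ^^ (p * Suc q)) x = (f ^^ p) ((f ^^ (p * q)) x)" by (simp add: funpow_add')
  thus ?case using Suc by simp
qed

lemma reach_all:
  assumes fin: "finite S" and cl: "\<And>y. y \<in> S \<Longrightarrow> f y \<in> S" and inj: "inj_on f S"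
    and t: "\<And>x. x \<in> S \<Longrightarrow> \<exists>k. (f ^^ k) x = t"
    and x: "x \<in> S" and y: "y \<in> S"
  shows "\<exists>k. (f ^^ k) x = y"
proof -
  obtain k where k: "(f ^^ k) x = t" using t x by blast
  obtain m where m: "(f ^^ m) y = t" using t y by blast
  obtain p where p: "p > 0" "(f ^^ p) y = y" using periodic[OF fin cl inj y] by blast
  have pm: "p * m \<ge> m" using p by simp
  have "(f ^^ (p * m - m + k)) x = (f ^^ (p * m - m)) ((f ^^ k) x)" by (rule funpow_add')
  also have "\<dots> = (f ^^ (p * m - m)) ((f ^^ m) y)" using k m by simp
  also have "\<dots> = (f ^^ (p * m)) y" using pm by (simp add: funpow_add'[symmetric])
  also have "\<dots> = y" by (rule funpow_mult_fix[OF p(2)])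
  finally show ?thesis by blast
qed

lemma orbit_struct:
  assumes fin: "finite S" and cl: "\<And>y. y \<in> S \<Longrightarrow> f y \<in> S"
    and all: "\<And>u y. u \<in> S \<Longrightarrow> y \<in> S \<Longrightarrow> \<exists>k. (f ^^ k) u = y" and x: "x \<in> S"
  shows "inj_on (\<lambda>k. (f ^^ k) x) {..<card S}" "(\<lambda>k. (f ^^ k) x) ` {..<card S} = S"
    "(f ^^ card S) x = x"
proof -
  obtain k0 where k0: "(f ^^ k0) (f x) = x" using all[OF cl[OF x] x] by blast
  have "(f ^^ Suc k0) x = x" using k0 by (simp only: funpow_Suc_right comp_def)
  hence ex: "\<exists>p. p > 0 \<and> (f ^^ p) x = x" by blast
  define p where "p = (LEAST p. p > 0 \<and> (f ^^ p) x = x)"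
  have p: "p > 0" "(f ^^ p) x = x" using LeastI_ex[OF ex] by (simp_all add: p_def)
  have pmin: "(f ^^ q) x \<noteq> x" if "0 < q" "q < p" for q
  proof -
    have "q < (LEAST p. p > 0 \<and> (f ^^ p) x = x)" using that by (simp add: p_def)
    hence "\<not> (0 < q \<and> (f ^^ q) x = x)" by (rule not_less_Least)
    thus ?thesis using that by blast
  qed
  have injp: "inj_on (\<lambda>k. (f ^^ k) x) {..<p}"
  proof (rule inj_onI, rule ccontr)
    fix a b assume a: "a \<in> {..<p}" and b: "b \<in> {..<p}" and e: "(f ^^ a) x = (f ^^ b) x" and ne: "a \<noteq> b"
    have gen: "(f ^^ a) x = (f ^^ b) x \<Longrightarrow> a < b \<Longrightarrow> b < p \<Longrightarrow> False" for a b
    proof -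
      assume e: "(f ^^ a) x = (f ^^ b) x" and ab: "a < b" "b < p"
      have "(f ^^ (p - b + a)) x = (f ^^ (p - b)) ((f ^^ a) x)" by (rule funpow_add')
      also have "\<dots> = (f ^^ (p - b)) ((f ^^ b) x)" using e by simp
      also have "\<dots> = (f ^^ p) x" using ab by (simp add: funpow_add'[symmetric])
      finally have "(f ^^ (p - b + a)) x = x" using p by simp
      moreover have "0 < p - b + a" "p - b + a < p" using ab by auto
      ultimately show False using pmin[of "p - b + a"] by simp
    qed
    show False
    proof (cases "a < b")
      case True thus False using gen[OF e] b by simp
    next
      case False hence "b < a" using ne by simp
      thus False using gen[OF e[symmetric]] a by simp
    qed
  qed
  have modp: "(f ^^ k) x = (f ^^ (k mod p)) x" for k
  proof -
    have "(f ^^ k) x = (f ^^ (k mod p + p * (k div p))) x" by simp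
    also have "\<dots> = (f ^^ (k mod p)) ((f ^^ (p * (k div p))) x)" by (rule funpow_add')
    also have "\<dots> = (f ^^ (k mod p)) x" using funpow_mult_fix[OF p(2)] by simp
    finally show ?thesis .
  qed
  have imgp: "(\<lambda>k. (f ^^ k) x) ` {..<p} = S"
  proof
    show "(\<lambda>k. (f ^^ k) x) ` {..<p} \<subseteq> S" using funpow_in[of x S f, OF x cl] by auto
    show "S \<subseteq> (\<lambda>k. (f ^^ k) x) ` {..<p}"
    proof
      fix y assume "y \<in> S"
      then obtain k where "(f ^^ k) x = y" using all[OF x] by blast
      hence "y = (f ^^ (k mod p)) x" using modp by simp
      moreover have "k mod p \<in> {..<p}" using p by simp
      ultimately show "y \<in> (\<lambda>k. (f ^^ k) x) ` {..<p}" by blast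
    qed
  qed
  have cp: "card S = p" using card_image[OF injp] imgp by simp
  show "inj_on (\<lambda>k. (f ^^ k) x) {..<card S}" using injp cp by simp
  show "(\<lambda>k. (f ^^ k) x) ` {..<card S} = S" using imgp cp by simp
  show "(f ^^ card S) x = x" using p cp by simp
qed


lemma iface_vals:
  "ifacefsets ZP = {(0,0,1),(1,0,1),(0,1,1),(1,1,1)}"
  "ifacefsets ZN = {(0,0,0),(1,0,0),(0,1,0),(1,1,0)}"
  "ifacefsets XP = {(1,0,0),(1,1,0),(1,0,1),(1,1,1)}"
  "ifacefsets XN = {(0,0,0),(0,1,0),(0,0,1),(0,1,1)}"
  "ifacefsets YP = {(0,1,0),(1,1,0),(0,1,1),(1,1,1)}"
  "ifacefsets YN = {(0,0,0),(1,0,0),(0,0,1),(1,0,1)}"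
  by (auto simp: ifacefsets_def)

lemma corners_vals:
  "corners ((a,b,w),ZP) = {(a,b,w+1),(a+1,b,w+1),(a,b+1,w+1),(a+1,b+1,w+1)}"
  "corners ((a,b,w),ZN) = {(a,b,w),(a+1,b,w),(a,b+1,w),(a+1,b+1,w)}"
  "corners ((a,b,w),XP) = {(a+1,b,w),(a+1,b+1,w),(a+1,b,w+1),(a+1,b+1,w+1)}"
  "corners ((a,b,w),XN) = {(a,b,w),(a,b+1,w),(a,b,w+1),(a,b+1,w+1)}"
  "corners ((a,b,w),YP) = {(a,b+1,w),(a+1,b+1,w),(a,b+1,w+1),(a+1,b+1,w+1)}"
  "corners ((a,b,w),YN) = {(a,b,w),(a+1,b,w),(a,b,w+1),(a+1,b,w+1)}"
  by (simp_all add: corners_def iface_vals)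

lemma zlo_i: "zlo P + int i = lvl P i + 1" by (simp add: lvl_def)

lemma plane_edge_vals:
  assumes "z = lvl P i"
  shows
  "plane_edge P i ((x,y,z),XP) = {(x+1,y,z+1),(x+1,y+1,z+1)}"
  "plane_edge P i ((x,y,z),XN) = {(x,y,z+1),(x,y+1,z+1)}"
  "plane_edge P i ((x,y,z),YP) = {(x,y+1,z+1),(x+1,y+1,z+1)}"
  "plane_edge P i ((x,y,z),YN) = {(x,y,z+1),(x+1,y,z+1)}"
  using assms by (auto simp: plane_edge_def corners_vals zlo_i)

lemma edge_sub: "E \<in> cell_edges f \<Longrightarrow> E \<subseteq> corners f"
  by (auto simp: cell_edges_def)

lemma edge_in: "p \<in> corners f \<Longrightarrow> q \<in> corners f \<Longrightarrow> l1 p q = 1 \<Longrightarrow> {p,q} \<in> cell_edges f"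
  unfolding cell_edges_def by blast

lemma hcells_iff: "((a,b,w),s) \<in> hcells P i \<longleftrightarrow> (a,b,w) \<in> P \<and>
   ((s = ZP \<and> w = lvl P i \<and> (a,b,w+1) \<notin> P) \<or> (s = ZN \<and> w = lvl P i + 1 \<and> (a,b,w-1) \<notin> P))"
  by (auto simp: hcells_def surface_cell_def)

lemma f_loc:
  assumes r: "((x,y,z),d) \<in> band P i" and f: "f \<in> hcells P i"
    and e: "plane_edge P i ((x,y,z),d) \<in> cell_edges f"
  shows "f = ((x,y,z),ZP) \<or> f = (padd (padd (x,y,z) (dvec d)) (0,0,1), ZN)"
proof -
  obtain a b w s where ff: "f = ((a,b,w),s)" by (cases f) auto
  have rr: "(x,y,z) \<in> P" "d \<in> {XP,XN,YP,YN}" "z = lvl P i" "padd (x,y,z) (dvec d) \<notin> P"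
    using r unfolding band_iff by auto
  have fh: "(a,b,w) \<in> P" "(s = ZP \<and> w = lvl P i \<and> (a,b,w+1) \<notin> P) \<or> (s = ZN \<and> w = lvl P i + 1 \<and> (a,b,w-1) \<notin> P)"
    using f unfolding ff hcells_iff by auto
  have sub: "plane_edge P i ((x,y,z),d) \<subseteq> corners ((a,b,w),s)" using edge_sub[OF e] ff by simp
  show ?thesis using rr(2)
  proof (elim insertE emptyE)
    assume d: "d = XP"
    have "(x+1,y,z+1) \<in> corners ((a,b,w),s)" "(x+1,y+1,z+1) \<in> corners ((a,b,w),s)"
      using sub plane_edge_vals[OF rr(3)] d by auto
    thus ?thesis using fh rr d ff by (elim disjE conjE) (auto simp: corners_vals)
  next
    assume d: "d = XN"
    have "(x,y,z+1) \<in> corners ((a,b,w),s)" "(x,y+1,z+1) \<in> corners ((a,b,w),s)"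
      using sub plane_edge_vals[OF rr(3)] d by auto
    thus ?thesis using fh rr d ff by (elim disjE conjE) (auto simp: corners_vals)
  next
    assume d: "d = YP"
    have "(x,y+1,z+1) \<in> corners ((a,b,w),s)" "(x+1,y+1,z+1) \<in> corners ((a,b,w),s)"
      using sub plane_edge_vals[OF rr(3)] d by auto
    thus ?thesis using fh rr d ff by (elim disjE conjE) (auto simp: corners_vals)
  next
    assume d: "d = YN"
    have "(x,y,z+1) \<in> corners ((a,b,w),s)" "(x+1,y,z+1) \<in> corners ((a,b,w),s)"
      using sub plane_edge_vals[OF rr(3)] d by auto
    thus ?thesis using fh rr d ff by (elim disjE conjE) (auto simp: corners_vals)
  qed
qed

lemma adj_common:
  assumes "cell_adj f g"
  obtains p q where "p \<in> corners f" "q \<in> corners f" "p \<in> corners g" "q \<in> corners g" "l1 p q = 1"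
proof -
  obtain E where E: "E \<in> cell_edges f" "E \<in> cell_edges g" using assms unfolding cell_adj_def by blast
  then obtain p q where pq: "E = {p,q}" "p \<in> corners f" "q \<in> corners f" "l1 p q = 1"
    unfolding cell_edges_def by blast
  have "E \<subseteq> corners g" using edge_sub[OF E(2)] .
  thus ?thesis using that pq by auto
qed

lemma l1_self: "l1 p p = 0" by (cases p) auto

lemma corner_ZP: "p \<in> corners ((a,b,w),ZP) \<longleftrightarrow> (\<exists>u v. (u = 0 \<or> u = 1) \<and> (v = 0 \<or> v = 1) \<and> p = (a+u,b+v,w+1))"
  unfolding corners_vals by force
lemma corner_ZN: "p \<in> corners ((a,b,w),ZN) \<longleftrightarrow> (\<exists>u v. (u = 0 \<or> u = 1) \<and> (v = 0 \<or> v = 1) \<and> p = (a+u,b+v,w))"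
  unfolding corners_vals by force

lemma mixed_diff:
  assumes "p \<in> corners ((a,b,w),ZP)" "q \<in> corners ((a,b,w),ZP)"
    "p \<in> corners ((a',b',w+1),ZN)" "q \<in> corners ((a',b',w+1),ZN)" "l1 p q = 1"
  shows "(a' = a \<and> b' = b) \<or> (a' = a+1 \<and> b' = b) \<or> (a' = a-1 \<and> b' = b) \<or> (a' = a \<and> b' = b+1) \<or> (a' = a \<and> b' = b-1)"
proof -
  obtain u1 v1 where p1: "u1 = 0 \<or> u1 = 1" "v1 = 0 \<or> v1 = 1" "p = (a+u1,b+v1,w+1)" using assms(1) unfolding corner_ZP by blast
  obtain u2 v2 where q1: "u2 = 0 \<or> u2 = 1" "v2 = 0 \<or> v2 = 1" "q = (a+u2,b+v2,w+1)" using assms(2) unfolding corner_ZP by blast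
  obtain u3 v3 where p2: "u3 = 0 \<or> u3 = 1" "v3 = 0 \<or> v3 = 1" "p = (a'+u3,b'+v3,w+1)" using assms(3) unfolding corner_ZN by blast
  obtain u4 v4 where q2: "u4 = 0 \<or> u4 = 1" "v4 = 0 \<or> v4 = 1" "q = (a'+u4,b'+v4,w+1)" using assms(4) unfolding corner_ZN by blast
  have e: "a+u1 = a'+u3" "b+v1 = b'+v3" "a+u2 = a'+u4" "b+v2 = b'+v4" using p1 p2 q1 q2 by auto
  have l: "\<bar>u1 - u2\<bar> + \<bar>v1 - v2\<bar> = 1" using assms(5) p1 q1 by simp
  have da: "a' - a = u1 - u3" "a' - a = u2 - u4" "b' - b = v1 - v3" "b' - b = v2 - v4" using e by linarith+
  have r1: "a' - a \<ge> -1 \<and> a' - a \<le> 1" using da(1) p1(1) p2(1) by auto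
  have r2: "b' - b \<ge> -1 \<and> b' - b \<le> 1" using da(3) p1(2) p2(2) by auto
  have u: "a' - a \<noteq> 0 \<Longrightarrow> u1 = u2" using da(1,2) p1(1) q1(1) p2(1) q2(1) by auto
  have v: "b' - b \<noteq> 0 \<Longrightarrow> v1 = v2" using da(3,4) p1(2) q1(2) p2(2) q2(2) by auto
  have nb: "\<not> (a' - a \<noteq> 0 \<and> b' - b \<noteq> 0)" using u v l by fastforce
  show ?thesis using r1 r2 nb by auto
qed

lemma no_mixed_adj:
  assumes pc: "polycube P" and f: "((a,b,w),ZP) \<in> hcells P i" and g: "((a',b',w'),ZN) \<in> hcells P i"
    and adj: "cell_adj ((a,b,w),ZP) ((a',b',w'),ZN)"
  shows False
proof -
  have fh: "(a,b,w) \<in> P" "w = lvl P i" "(a,b,w+1) \<notin> P" using f unfolding hcells_iff by auto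
  have gh: "(a',b',w') \<in> P" "w' = w + 1" "(a',b',w) \<notin> P" using g fh(2) unfolding hcells_iff by auto
  obtain p q where pq: "p \<in> corners ((a,b,w),ZP)" "q \<in> corners ((a,b,w),ZP)"
    "p \<in> corners ((a',b',w+1),ZN)" "q \<in> corners ((a',b',w+1),ZN)" "l1 p q = 1"
    using adj_common[OF adj] gh(2) by metis
  have V: "\<And>e. e \<in> {XP,XN,YP,YN} \<Longrightarrow> padd (a,b,w) (dvec e) \<notin> P \<Longrightarrow> padd (padd (a,b,w) (dvec e)) (0,0,1) \<in> P \<Longrightarrow> False"
    using pinch_V[OF pc fh(1)] fh(3) by simp
  from mixed_diff[OF pq] show False
  proof (elim disjE conjE)
    assume "a' = a" "b' = b" thus False using gh fh by simp
  next
    assume "a' = a+1" "b' = b" thus False using gh V[of XP] by simp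
  next
    assume "a' = a-1" "b' = b" thus False using gh V[of XN] by simp
  next
    assume "a' = a" "b' = b+1" thus False using gh V[of YP] by simp
  next
    assume "a' = a" "b' = b-1" thus False using gh V[of YN] by simp
  qed
qed


definition U :: "cell \<Rightarrow> cell \<Rightarrow> int \<times> int" where
  "U a f = (if fp (fst f) = fp (fst a) then hvec (opp (snd a)) else hvec (snd a))"

lemma beam_mem: "g \<in> beam P i a \<longleftrightarrow> g \<in> hcells P i \<and> (\<exists>f\<in>hcells P i. plane_edge P i a \<in> cell_edges f \<and>
   (\<exists>k::nat. fp (fst g) = add2 (fp (fst f)) (scale2 (int k) (U a f)) \<and>
      (\<forall>j\<le>k. \<exists>h\<in>hcells P i. fp (fst h) = add2 (fp (fst f)) (scale2 (int j) (U a f)))))"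
  by (simp add: beam_def Let_def U_def)

lemma conv_d:
  assumes oc: "ortho_convex_layers P" and i: "1 \<le> i" "i \<le> num_m P"
    and d: "d \<in> {XP,XN,YP,YN}" and hv: "hvec d = (dx,dy)"
    and p1: "(x,y,lvl P i) \<in> P" and p2: "(x + n*dx, y + n*dy, lvl P i) \<in> P" and n: "n \<ge> 1"
  shows "(x+dx, y+dy, lvl P i) \<in> P"
  using d
proof (elim insertE emptyE)
  assume "d = XP" hence dd: "dx = 1" "dy = 0" using hv by auto
  thus ?thesis using p1 p2 n convex_x[OF oc i p1, of "x+n" "x+1"] by simp
next
  assume "d = XN" hence dd: "dx = -1" "dy = 0" using hv by auto
  thus ?thesis using p1 p2 n convex_x[OF oc i _ p1, of "x-n" "x-1"] by simp
next
  assume "d = YP" hence dd: "dx = 0" "dy = 1" using hv by auto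
  thus ?thesis using p1 p2 n convex_y[OF oc i p1, of "y+n" "y+1"] by simp
next
  assume "d = YN" hence dd: "dx = 0" "dy = -1" using hv by auto
  thus ?thesis using p1 p2 n convex_y[OF oc i _ p1, of "y-n" "y-1"] by simp
qed

lemma dir_facts:
  assumes "d \<in> {XP,XN,YP,YN}"
  obtains dx dy where "hvec d = (dx,dy)" "dvec d = (dx,dy,0)" "hvec (opp d) = (-dx,-dy)" "dvec (opp d) = (-dx,-dy,0)"
    "(dx,dy) \<noteq> (0,0)" "opp d \<in> {XP,XN,YP,YN}"
  using assms by (elim insertE emptyE) auto

lemma hcell_at:
  assumes "h \<in> hcells P i" "fp (fst h) = (a,b)"
  shows "((a,b,lvl P i) \<in> P \<and> (a,b,lvl P i + 1) \<notin> P \<and> h = ((a,b,lvl P i),ZP)) \<or>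
         ((a,b,lvl P i + 1) \<in> P \<and> (a,b,lvl P i) \<notin> P \<and> h = ((a,b,lvl P i + 1),ZN))"
proof -
  obtain a' b' w s where hh: "h = ((a',b',w),s)" by (cases h) auto
  show ?thesis using assms unfolding hh hcells_iff by auto
qed

lemma adj_side_bottom:
  assumes "d \<in> {XP,XN,YP,YN}"
  shows "cell_adj ((a,b,w),d) ((a,b,w),ZN)"
proof -
  have "\<exists>p q. p \<in> corners ((a,b,w),d) \<and> q \<in> corners ((a,b,w),d) \<and> p \<in> corners ((a,b,w),ZN) \<and> q \<in> corners ((a,b,w),ZN) \<and> l1 p q = 1"
    using assms
  proof (elim insertE emptyE)
    assume "d = XP" thus ?thesis by (intro exI[of _ "(a+1,b,w)"] exI[of _ "(a+1,b+1,w)"]) (simp add: corners_vals)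
  next
    assume "d = XN" thus ?thesis by (intro exI[of _ "(a,b,w)"] exI[of _ "(a,b+1,w)"]) (simp add: corners_vals)
  next
    assume "d = YP" thus ?thesis by (intro exI[of _ "(a,b+1,w)"] exI[of _ "(a+1,b+1,w)"]) (simp add: corners_vals)
  next
    assume "d = YN" thus ?thesis by (intro exI[of _ "(a,b,w)"] exI[of _ "(a+1,b,w)"]) (simp add: corners_vals)
  qed
  then obtain p q where pq: "p \<in> corners ((a,b,w),d)" "q \<in> corners ((a,b,w),d)" "p \<in> corners ((a,b,w),ZN)" "q \<in> corners ((a,b,w),ZN)" "l1 p q = 1"
    by blast
  have "{p,q} \<in> cell_edges ((a,b,w),d) \<inter> cell_edges ((a,b,w),ZN)" using pq edge_in by blast
  moreover have "((a,b,w),d) \<noteq> ((a,b,w),ZN)" using assms by auto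
  ultimately show ?thesis unfolding cell_adj_def by blast
qed

lemma lvl_Suc: "lvl P (Suc i) = lvl P i + 1" by (simp add: lvl_def)

lemma beam_cases:
  assumes pc: "polycube P" and oc: "ortho_convex_layers P" and i: "1 \<le> i" "i \<le> num_m P"
    and r: "((x,y,z),d) \<in> band P i" and ne: "beam P i ((x,y,z),d) \<noteq> {}"
  shows "(\<forall>g\<in>beam P i ((x,y,z),d). snd g = ZP) \<or>
         (\<exists>b\<in>band P (Suc i). parallel b ((x,y,z),d) \<and> adj_to b (beam P i ((x,y,z),d)))"
proof -
  define R where "R = ((x,y,z),d)"
  have rr: "(x,y,z) \<in> P" "d \<in> {XP,XN,YP,YN}" "z = lvl P i" "padd (x,y,z) (dvec d) \<notin> P"
    using r unfolding band_iff by auto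
  obtain dx dy where dxy: "hvec d = (dx,dy)" "dvec d = (dx,dy,0)" "hvec (opp d) = (-dx,-dy)"
    "dvec (opp d) = (-dx,-dy,0)" "(dx,dy) \<noteq> (0,0)" "opp d \<in> {XP,XN,YP,YN}"
    using dir_facts[OF rr(2)] by metis
  have nd: "(x+dx,y+dy,z) \<notin> P" using rr(4) dxy by simp
  define FA where "FA = ((x,y,z),ZP)"
  define FB where "FB = ((x+dx,y+dy,z+1),ZN)"
  have floc: "f = FA \<or> f = FB" if "f \<in> hcells P i" "plane_edge P i R \<in> cell_edges f" for f
    using f_loc[OF r that[unfolded R_def]] dxy unfolding FA_def FB_def by simp
  have notboth: False if A: "FA \<in> hcells P i" and B: "FB \<in> hcells P i"
  proof -
    have "(x,y,z+1) \<notin> P" using A unfolding FA_def hcells_iff by auto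
    moreover have "(x+dx,y+dy,z+1) \<in> P" using B unfolding FB_def hcells_iff by auto
    ultimately show False using pinch_V[OF pc rr(1) rr(2)] rr(4) dxy by simp
  qed
  obtain g0 where g0: "g0 \<in> beam P i R" using ne R_def by auto
  then obtain f0 where f0: "f0 \<in> hcells P i" "plane_edge P i R \<in> cell_edges f0" unfolding beam_mem by blast
  have UA: "U R FA = (-dx,-dy)" using dxy by (simp add: U_def FA_def R_def)
  have UB: "U R FB = (dx,dy)" using dxy by (auto simp: U_def FB_def R_def)
  show ?thesis
  proof (cases "f0 = FA")
    case True
    hence FAh: "FA \<in> hcells P i" using f0 by simp
    have onlyA: "f = FA" if "f \<in> hcells P i" "plane_edge P i R \<in> cell_edges f" for f
      using floc[OF that] notboth FAh that(1) by blast
    have "\<forall>g\<in>beam P i R. snd g = ZP"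
    proof
      fix g assume g: "g \<in> beam P i R"
      then obtain f k where f: "f \<in> hcells P i" "plane_edge P i R \<in> cell_edges f"
        and gk: "fp (fst g) = add2 (fp (fst f)) (scale2 (int k) (U R f))"
        and ch: "\<forall>j\<le>k. \<exists>h\<in>hcells P i. fp (fst h) = add2 (fp (fst f)) (scale2 (int j) (U R f))"
        and gh: "g \<in> hcells P i" unfolding beam_mem by blast
      have fA: "f = FA" using onlyA f by blast
      have chA: "\<forall>j\<le>k. \<exists>h\<in>hcells P i. fp (fst h) = (x + int j * (-dx), y + int j * (-dy))"
        using ch unfolding fA UA by (simp add: FA_def)
      have cl: "(x + int j*(-dx), y + int j*(-dy), z) \<in> P \<and> (x + int j*(-dx), y + int j*(-dy), z+1) \<notin> P" if "j \<le> k" for j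
        using that
      proof (induction j)
        case 0 thus ?case using FAh rr by (simp add: FA_def hcells_iff)
      next
        case (Suc j)
        hence IH: "(x + int j*(-dx), y + int j*(-dy), z) \<in> P" "(x + int j*(-dx), y + int j*(-dy), z+1) \<notin> P" by auto
        obtain h where h: "h \<in> hcells P i" "fp (fst h) = (x + int (Suc j) * (-dx), y + int (Suc j) * (-dy))"
          using chA Suc.prems by blast
        have eqs: "x + int (Suc j) * (-dx) = x + int j * (-dx) + (-dx)" "y + int (Suc j) * (-dy) = y + int j * (-dy) + (-dy)"
          by (simp_all add: algebra_simps)
        from hcell_at[OF h] show ?case
        proof (elim disjE conjE)
          assume "(x + int (Suc j) * (-dx), y + int (Suc j) * (-dy), lvl P i) \<in> P"
            "(x + int (Suc j) * (-dx), y + int (Suc j) * (-dy), lvl P i + 1) \<notin> P"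
          thus ?case using rr(3) by simp
        next
          assume A1: "(x + int (Suc j) * (-dx), y + int (Suc j) * (-dy), lvl P i + 1) \<in> P"
            and A2: "(x + int (Suc j) * (-dx), y + int (Suc j) * (-dy), lvl P i) \<notin> P"
          have "False"
            using pinch_V[OF pc IH(1) dxy(6)] IH(2) A1 A2 rr(3) dxy(4) unfolding eqs by simp
          thus ?case ..
        qed
      qed
      obtain a b w s where gg: "g = ((a,b,w),s)" by (cases g) auto
      have ab: "fp (fst g) = (x + int k * (-dx), y + int k * (-dy))" using gk unfolding fA UA by (simp add: FA_def)
      from hcell_at[OF gh ab] cl[of k] rr(3) show "snd g = ZP" by auto
    qed
    thus ?thesis unfolding R_def by blast
  next
    case False
    hence f0B: "f0 = FB" using floc f0 by blast
    hence FBh: "FB \<in> hcells P i" using f0 by simp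
    define pos where "pos j = (x + dx + int j * dx, y + dy + int j * dy)" for j :: nat
    have nP: "(fst (pos j), snd (pos j), z) \<notin> P" for j
    proof
      assume h: "(fst (pos j), snd (pos j), z) \<in> P"
      have "(x + (int j + 1) * dx, y + (int j + 1) * dy, lvl P i) \<in> P"
        using h rr(3) by (simp add: pos_def algebra_simps)
      hence "(x + dx, y + dy, lvl P i) \<in> P"
        using conv_d[OF oc i rr(2) dxy(1), of x y "int j + 1"] rr(1,3) by simp
      thus False using nd rr(3) by simp
    qed
    define J where "J = {j. \<forall>j'\<le>j. \<exists>h\<in>hcells P i. fp (fst h) = pos j'}"
    have inJ: "(fst (pos j), snd (pos j), z+1) \<in> P" if jJ: "j \<in> J" for j
    proof -
      obtain h where h0: "h \<in> hcells P i" "fp (fst h) = pos j" using jJ unfolding J_def by blast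
      hence h: "h \<in> hcells P i" "fp (fst h) = (fst (pos j), snd (pos j))" by auto
      from hcell_at[OF h] nP[of j] rr(3) show ?thesis by auto
    qed
    define \<phi> where "\<phi> j = (fst (pos j), snd (pos j), z+1)" for j
    have injphi: "inj \<phi>"
    proof (rule injI)
      fix j1 j2 assume "\<phi> j1 = \<phi> j2"
      hence "int j1 * dx = int j2 * dx" "int j1 * dy = int j2 * dy" by (auto simp: \<phi>_def pos_def)
      thus "j1 = j2" using dxy(5) by auto
    qed
    have finJ: "finite J"
    proof -
      have "J \<subseteq> \<phi> -` P" using inJ by (auto simp: \<phi>_def)
      moreover have "finite (\<phi> -` P)" using pc injphi by (intro finite_vimageI) (auto simp: polycube_def)
      ultimately show ?thesis by (rule finite_subset)
    qed
    have J0: "0 \<in> J" unfolding J_def using FBh by (intro CollectI allI impI bexI[of _ FB]) (auto simp: FB_def pos_def)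
    define K where "K = Max J"
    have KJ: "K \<in> J" unfolding K_def using finJ J0 by (intro Max_in) auto
    have KS: "Suc K \<notin> J"
    proof
      assume "Suc K \<in> J"
      hence "Suc K \<le> K" unfolding K_def using finJ by (rule Max_ge[rotated])
      thus False by simp
    qed
    define e where "e = (fst (pos K), snd (pos K), z+1)"
    have eP: "e \<in> P" using inJ[OF KJ] by (simp add: e_def)
    have ed: "padd e (dvec d) \<notin> P"
    proof
      assume h: "padd e (dvec d) \<in> P"
      have pe: "padd e (dvec d) = (fst (pos (Suc K)), snd (pos (Suc K)), z+1)"
        using dxy by (simp add: e_def pos_def algebra_simps)
      have "((fst (pos (Suc K)), snd (pos (Suc K)), z+1), ZN) \<in> hcells P i"
        using h nP[of "Suc K"] rr(3) unfolding pe hcells_iff by simp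
      hence "Suc K \<in> J" using KJ unfolding J_def
        by (auto simp: le_Suc_eq intro: bexI[of _ "((fst (pos (Suc K)), snd (pos (Suc K)), z+1), ZN)"])
      thus False using KS by simp
    qed
    define b where "b = (e, d)"
    have bband: "b \<in> band P (Suc i)"
      using eP ed rr(2,3) unfolding b_def e_def band_def surface_cell_def horiz_def by (auto simp: lvl_Suc)
    have par: "parallel b R" by (simp add: parallel_def b_def R_def)
    define g where "g = (e, ZN)"
    have gh: "g \<in> hcells P i" using eP nP[of K] rr(3) unfolding g_def e_def hcells_iff by simp
    have gb: "g \<in> beam P i R"
      unfolding beam_mem
    proof (intro conjI gh bexI[of _ FB] FBh exI[of _ K])
      show "plane_edge P i R \<in> cell_edges FB" using f0 f0B by simp
      show "fp (fst g) = add2 (fp (fst FB)) (scale2 (int K) (U R FB))"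
        unfolding UB by (simp add: g_def e_def pos_def FB_def algebra_simps)
      show "\<forall>j\<le>K. \<exists>h\<in>hcells P i. fp (fst h) = add2 (fp (fst FB)) (scale2 (int j) (U R FB))"
        using KJ unfolding UB J_def by (simp add: pos_def FB_def algebra_simps)
    qed
    have adj: "cell_adj b g"
      unfolding b_def g_def e_def by (rule adj_side_bottom[OF rr(2)])
    have "\<exists>b\<in>band P (Suc i). parallel b R \<and> adj_to b (beam P i R)"
      using bband par adj gb unfolding adj_to_def by blast
    thus ?thesis unfolding R_def by blast
  qed
qed


lemma face_ZP:
  assumes pc: "polycube P" and g0: "g0 \<in> hcells P i" "snd g0 = ZP"
  shows "(g0,h) \<in> rtrancl (adj_in (hcells P i)) \<Longrightarrow> snd h = ZP \<and> h \<in> hcells P i"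
proof (induction rule: rtrancl_induct)
  case base thus ?case using g0 by simp
next
  case (step h1 h2)
  have a: "h1 \<in> hcells P i" "h2 \<in> hcells P i" "cell_adj h1 h2" using step.hyps(2) by (auto simp: adj_in_def)
  obtain a1 b1 w1 where h1: "h1 = ((a1,b1,w1),ZP)" using step.IH by (metis prod.collapse)
  obtain a2 b2 w2 s2 where h2: "h2 = ((a2,b2,w2),s2)" by (metis prod.collapse)
  have "s2 = ZP \<or> s2 = ZN" using a(2) unfolding h2 hcells_iff by auto
  moreover have "s2 \<noteq> ZN"
  proof
    assume "s2 = ZN"
    thus False using no_mixed_adj[OF pc, of a1 b1 w1 i a2 b2 w2] a unfolding h1 h2 by simp
  qed
  ultimately show ?case using a h2 by auto
qed

lemma clip_facts:
  assumes pc: "polycube P" and ne: "beam P i r \<noteq> {}" and zp: "\<forall>g\<in>beam P i r. snd g = ZP"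
  shows "beam P i r \<subseteq> clip P i p r" "\<forall>a\<in>clip P i p r. snd a = ZP"
proof -
  define B where "B = beam P i r"
  define F where "F = iface P i (SOME g. g \<in> B)"
  define t where "t = hvec (tdir p (snd r))"
  define H where "H = {g \<in> F. dot2 t (fp (fst g)) \<ge> dot2 t (fp (fst r))}"
  have cl: "clip P i p r = {g. \<exists>b \<in> B. (b, g) \<in> rtrancl (adj_in H)}"
    using ne unfolding clip_def B_def F_def t_def H_def Let_def by simp
  show "beam P i r \<subseteq> clip P i p r" unfolding cl B_def by blast
  have g0: "(SOME g. g \<in> B) \<in> B" using ne unfolding B_def by (metis some_in_eq)
  have g0h: "(SOME g. g \<in> B) \<in> hcells P i" "snd (SOME g. g \<in> B) = ZP"
  proof -
    have bsub: "beam P i r \<subseteq> hcells P i" unfolding beam_def by blast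
    show "(SOME g. g \<in> B) \<in> hcells P i" using g0 bsub unfolding B_def by blast
    show "snd (SOME g. g \<in> B) = ZP" using g0 zp unfolding B_def by blast
  qed
  have FZ: "snd h = ZP" if "h \<in> F" for h
    using face_ZP[OF pc g0h] that unfolding F_def iface_def by blast
  show "\<forall>a\<in>clip P i p r. snd a = ZP"
  proof
    fix a assume "a \<in> clip P i p r"
    then obtain b where b: "b \<in> B" "(b,a) \<in> rtrancl (adj_in H)" unfolding cl by blast
    from b(2) show "snd a = ZP"
    proof (cases rule: rtranclE)
      case base thus ?thesis using b(1) zp B_def by simp
    next
      case (step y)
      hence "a \<in> H" by (auto simp: adj_in_def)
      thus ?thesis using FZ unfolding H_def by blast
    qed
  qed
qed

lemma adj_to_mono: "adj_to b S \<Longrightarrow> S \<subseteq> T \<Longrightarrow> adj_to b T"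
  unfolding adj_to_def by blast

lemma notgood_conclusion:
  assumes pc: "polycube P" and oc: "ortho_convex_layers P" and i: "1 \<le> i" "i \<le> num_m P"
    and r: "r \<in> band P i" and ng: "\<not> good_R P i p r"
  shows "clip P i p r \<noteq> {} \<and> (\<forall>a \<in> clip P i p r. snd a = ZP) \<and>
         \<not> (\<exists>b \<in> band P (Suc i). parallel b r \<and> adj_to b (clip P i p r)) \<and>
         beam P i r \<noteq> {} \<and> (\<forall>a \<in> beam P i r. snd a = ZP) \<and>
         \<not> (\<exists>b \<in> band P (Suc i). parallel b r \<and> adj_to b (beam P i r))"
proof -
  have c1: "clip P i p r \<noteq> {}" and c2: "\<not> (\<exists>b \<in> band P (Suc i). parallel b r \<and> adj_to b (clip P i p r))"
    using ng unfolding good_R_def by auto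
  have bne: "beam P i r \<noteq> {}" using c1 unfolding clip_def Let_def by auto
  obtain x y z d where rr: "r = ((x,y,z),d)" by (metis prod.collapse)
  have sub: "beam P i r \<subseteq> clip P i p r"
    unfolding clip_def Let_def using bne by auto
  have c3: "\<not> (\<exists>b \<in> band P (Suc i). parallel b r \<and> adj_to b (beam P i r))"
    using c2 sub adj_to_mono by blast
  have zp: "\<forall>g\<in>beam P i r. snd g = ZP"
    using beam_cases[OF pc oc i r[unfolded rr] bne[unfolded rr]] c3 rr by blast
  have c4: "\<forall>a \<in> clip P i p r. snd a = ZP" using clip_facts(2)[OF pc bne zp] .
  show ?thesis using c1 c2 c3 c4 bne zp by blast
qed


lemma iter_inv:
  assumes u: "u \<in> band P i"
  shows "(bnext P (flip q) ^^ k) ((bnext P q ^^ k) u) = u"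
proof (induction k)
  case 0 thus ?case by simp
next
  case (Suc k)
  have m: "(bnext P q ^^ k) u \<in> band P i" using funpow_in[of u "band P i" "bnext P q", OF u bnext_band] .
  have e1: "(bnext P q ^^ Suc k) u = bnext P q ((bnext P q ^^ k) u)" by simp
  have e2: "(bnext P (flip q) ^^ Suc k) w = (bnext P (flip q) ^^ k) (bnext P (flip q) w)" for w
    by (simp only: funpow_Suc_right comp_def)
  have "(bnext P (flip q) ^^ Suc k) ((bnext P q ^^ Suc k) u) =
        (bnext P (flip q) ^^ k) (bnext P (flip q) (bnext P q ((bnext P q ^^ k) u)))"
    unfolding e1 e2 ..
  also have "\<dots> = (bnext P (flip q) ^^ k) ((bnext P q ^^ k) u)" using bnext_inv[OF m] by simp
  finally show ?case using Suc.IH by simp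
qed

lemma all_to_all:
  assumes pc: "polycube P" and oc: "ortho_convex_layers P" and cl: "connected_layers P"
    and i: "1 \<le> i" "i \<le> num_m P" and r0: "r0 \<in> band P i"
    and u: "u \<in> band P i" and v: "v \<in> band P i"
  shows "\<exists>k. (bnext P q ^^ k) u = v"
proof -
  have fin: "finite P" using pc by (simp add: polycube_def)
  interpret L: layer P "lvl P i"
  proof
    show "finite P" by (rule fin)
    show "\<And>x1 x2 x y. (x1,y,lvl P i) \<in> P \<Longrightarrow> (x2,y,lvl P i) \<in> P \<Longrightarrow> x1 \<le> x \<Longrightarrow> x \<le> x2 \<Longrightarrow> (x,y,lvl P i) \<in> P"
      using convex_x[OF oc i] by blast
    show "\<And>x1 y1 x2 y2 y. (x1,y1,lvl P i) \<in> P \<Longrightarrow> (x2,y2,lvl P i) \<in> P \<Longrightarrow> y1 \<le> y \<Longrightarrow> y < y2 \<Longrightarrow>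
                  \<exists>x. (x,y,lvl P i) \<in> P \<and> (x,y+1,lvl P i) \<in> P"
      using row_conn[OF pc cl i] by blast
    obtain x y z d where rr: "r0 = ((x,y,z),d)" by (metis prod.collapse)
    hence "(x,y,lvl P i) \<in> P" using r0 by (auto simp: band_iff)
    thus "\<exists>x y. (x,y,lvl P i) \<in> P" by blast
  qed
  have ccw: "\<exists>k. (bnext P CCW ^^ k) u' = v'" if "u' \<in> band P i" "v' \<in> band P i" for u' v'
  proof (rule reach_all[of "band P i" "bnext P CCW" L.Tprev])
    show "finite (band P i)" by (rule L.band_fin)
    show "\<And>y. y \<in> band P i \<Longrightarrow> bnext P CCW y \<in> band P i" by (rule bnext_band)
    show "inj_on (bnext P CCW) (band P i)"
      using bnext_inv[of _ P i CCW] by (intro inj_on_inverseI[where g="bnext P (flip CCW)"]) auto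
    show "\<And>x. x \<in> band P i \<Longrightarrow> \<exists>k. (bnext P CCW ^^ k) x = L.Tprev"
      using L.reach_Tprev[of i] by blast
  qed (use that in auto)
  show ?thesis
  proof (cases q)
    case CCW thus ?thesis using ccw[OF u v] by simp
  next
    case CW
    obtain k where k: "(bnext P CCW ^^ k) v = u" using ccw[OF v u] by blast
    have "(bnext P (flip CCW) ^^ k) ((bnext P CCW ^^ k) v) = v" by (rule iter_inv[OF v])
    thus ?thesis using k CW by auto
  qed
qed

lemma orbit_facts:
  assumes pc: "polycube P" and oc: "ortho_convex_layers P" and cl: "connected_layers P"
    and i: "1 \<le> i" "i \<le> num_m P" and a: "a \<in> band P i"
  shows "inj_on (\<lambda>k. (bnext P q ^^ k) a) {..<card (band P i)}"
    "(\<lambda>k. (bnext P q ^^ k) a) ` {..<card (band P i)} = band P i"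
    "(bnext P q ^^ card (band P i)) a = a"
proof -
  have fin: "finite (band P i)"
  proof -
    have "band P i \<subseteq> P \<times> {XP,XN,YP,YN}" by (auto simp: band_def surface_cell_def horiz_def)
    moreover have "finite (P \<times> {XP,XN,YP,YN})" using pc by (simp add: polycube_def)
    ultimately show ?thesis by (rule finite_subset)
  qed
  note os = orbit_struct[of "band P i" "bnext P q" a, OF fin bnext_band all_to_all[OF pc oc cl i a] a]
  show "inj_on (\<lambda>k. (bnext P q ^^ k) a) {..<card (band P i)}" using os(1) .
  show "(\<lambda>k. (bnext P q ^^ k) a) ` {..<card (band P i)} = band P i" using os(2) .
  show "(bnext P q ^^ card (band P i)) a = a" using os(3) .
qed

lemma least_idx:
  assumes inj: "inj_on (\<lambda>k. (f ^^ k) a) {..<N}" and K: "K < N"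
  shows "(LEAST n. (f ^^ n) a = (f ^^ K) a) = K"
proof (rule Least_equality)
  show "(f ^^ K) a = (f ^^ K) a" ..
  fix n assume e: "(f ^^ n) a = (f ^^ K) a"
  show "K \<le> n"
  proof (rule ccontr)
    assume "\<not> K \<le> n"
    hence "n < K" by simp
    hence "n = K" using inj_onD[OF inj e] K by simp
    thus False using \<open>n < K\<close> by simp
  qed
qed

lemma seg_eq:
  assumes inj: "inj_on (\<lambda>k. (bnext P q ^^ k) a) {..<N}" and K: "K < N"
  shows "band_seg P q a ((bnext P q ^^ K) a) = {(bnext P q ^^ k) a | k. k \<le> K}"
  unfolding band_seg_def least_idx[OF inj K] ..

lemma Lband:
  assumes sr: "selection_run P L R p" and i: "2 \<le> i" "i \<le> num_m P"
  shows "L i \<in> band P i"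
proof (cases "i = 2")
  case True thus ?thesis using sr unfolding selection_run_def by auto
next
  case False
  hence j: "2 \<le> i - 1" "i - 1 < num_m P" using i by auto
  hence "step_ok P (i-1) (L (i-1)) (p (i-1)) (R (i-1)) (L (Suc (i-1))) (p (Suc (i-1)))"
    using sr unfolding selection_run_def by blast
  hence "L (Suc (i-1)) \<in> band P (Suc (i-1))" unfolding step_ok_def cand_def by (auto split: if_splits)
  thus ?thesis using i by simp
qed

theorem lemma6:
  fixes P :: "pt set" and L R :: "nat \<Rightarrow> cell" and p :: "nat \<Rightarrow> pointer"
    and i :: nat and r :: cell
  assumes "polycube P"
    and "ortho_convex_layers P"
    and "connected_layers P"
    and "selection_run P L R p"
    and "1 \<le> i" and "i \<le> num_m P - 1"
    and "r \<in> band P i"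
    and "r \<notin> band_seg P (p i) (L i) (R i)"
  shows "clip P i (p i) r \<noteq> {} \<and> (\<forall>a \<in> clip P i (p i) r. snd a = ZP) \<and>
         \<not> (\<exists>b \<in> band P (Suc i). parallel b r \<and> adj_to b (clip P i (p i) r)) \<and>
         beam P i r \<noteq> {} \<and> (\<forall>a \<in> beam P i r. snd a = ZP) \<and>
         \<not> (\<exists>b \<in> band P (Suc i). parallel b r \<and> adj_to b (beam P i r))"
proof -
  note pc = assms(1) and oc = assms(2) and cl = assms(3) and sr = assms(4) and r = assms(7) and nseg = assms(8)
  have i: "1 \<le> i" "i \<le> num_m P" "i < num_m P" using assms(5,6) by auto
  define N where "N = card (band P i)"
  show ?thesis
  proof (cases "i = 1")
    case True
    have R1: "R 1 \<in> band P 1" and L1: "L 1 = bnext P CCW (R 1)" and p1: "p 1 = CCW"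
      using sr unfolding selection_run_def by auto
    have L1b: "L 1 \<in> band P 1" using L1 bnext_band[OF R1] by simp
    have i1: "1 \<le> (1::nat)" "1 \<le> num_m P" using i True by auto
    note oL = orbit_facts[OF pc oc cl i1 L1b, of CCW]
    note oR = orbit_facts[OF pc oc cl i1 R1, of CCW]
    define M where "M = card (band P 1)"
    have Mpos: "M > 0"
    proof (rule ccontr)
      assume "\<not> M > 0"
      hence "M = 0" by simp
      hence "band P 1 = {}" using oL(2) unfolding M_def by simp
      thus False using R1 by simp
    qed
    have "(bnext P CCW ^^ (M - 1)) (L 1) = R 1"
    proof -
      have "(bnext P CCW ^^ (M - 1)) (L 1) = (bnext P CCW ^^ Suc (M - 1)) (R 1)"
        unfolding L1 by (simp only: funpow_Suc_right comp_def)
      also have "\<dots> = R 1" using oR(3) Mpos unfolding M_def by simp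
      finally show ?thesis .
    qed
    hence seg: "band_seg P CCW (L 1) (R 1) = {(bnext P CCW ^^ k) (L 1) | k. k \<le> M - 1}"
      using seg_eq[OF oL(1), of "M - 1"] Mpos unfolding M_def by simp
    obtain k where k: "k < M" "r = (bnext P CCW ^^ k) (L 1)" using r True oL(2) unfolding M_def by force
    have "r \<in> band_seg P CCW (L 1) (R 1)" unfolding seg using k by auto
    thus ?thesis using nseg True p1 by simp
  next
    case False
    hence i2: "2 \<le> i" using i by simp
    have st: "step_ok P i (L i) (p i) (R i) (L (Suc i)) (p (Suc i))"
      using sr i2 i(3) unfolding selection_run_def by blast
    then obtain K where K: "K < N" "R i = (bnext P (p i) ^^ K) (L i)"
      and ngood: "\<And>k. K < k \<Longrightarrow> k < N \<Longrightarrow> \<not> good_R P i (p i) ((bnext P (p i) ^^ k) (L i))"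
      unfolding step_ok_def selects_R_def N_def by blast
    have Lb: "L i \<in> band P i" by (rule Lband[OF sr i2 i(2)])
    note oL = orbit_facts[OF pc oc cl i(1,2) Lb, of "p i"]
    have seg: "band_seg P (p i) (L i) (R i) = {(bnext P (p i) ^^ k) (L i) | k. k \<le> K}"
      unfolding K(2) by (rule seg_eq[OF oL(1)]) (use K N_def in simp)
    obtain k where k: "k < N" "r = (bnext P (p i) ^^ k) (L i)" using r oL(2) unfolding N_def by force
    have "\<not> k \<le> K" using nseg k unfolding seg by auto
    hence "\<not> good_R P i (p i) r" using ngood[of k] k by simp
    thus ?thesis by (rule notgood_conclusion[OF pc oc i(1,2) r])
  qed
qed


end
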